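(* Let $\chi$ be a character of $T$ of minimal depth $r>0$ such that the central character $\theta$ of $\pi_\chi=\mathrm{Ind}_B^G\chi$ has depth zero, and let $Y_\chi=g_d\Gamma g_d^{-1}=\begin{pmatrix}x_2\sqrt\epsilon&\epsilon^{-1}\varpi^{-d}\sqrt\epsilon\\ x_1^2\varpi^d\sqrt\epsilon&x_2\sqrt\epsilon\end{pmatrix}$ and $\zeta_\chi(t)=\chi(g_d^{-1}tg_d)$, where $\Gamma=\begin{pmatrix}x&0\\0&-\overline{x}\end{pmatrix}$, $x=x_1+x_2\sqrt\epsilon\in\mathfrak{p}_E^{-r}$, realizes $\chi$ on $T_{r/2+}/T_{r+}$ and $g_d=\begin{pmatrix}1&-\frac12\gamma^{-1}\\ \gamma&\frac12\end{pmatrix}$ with $\gamma=x_1\varpi^d\sqrt\epsilon$. Then for all $d>2r$, \[ \mathcal{S}_d(Y_\chi,\zeta_\chi)\cong\mathcal{S}_d(X_{\varpi^{-d}},\theta),\qquad X_{\varpi^{-d}}=\begin{pmatrix}0&\varpi^{-d}\sqrt\epsilon\\0&0\end{pmatrix}. \]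
   Context: $F$ non-archimedean local field, $p\neq2$, uniformiser $\varpi$; $E=F[\sqrt\epsilon]$ unramified quadratic. $G=\mathbb{U}(1,1)(F)$ (hermitian form $\mathrm{w}=\begin{pmatrix}0&1\\1&0\end{pmatrix}$), $\mathcal{K}=G\cap M_2(\mathcal{O}_E)$, $B$ upper triangular Borel, $T$ diagonal torus $\{\mathrm{diag}(a,\overline{a}^{-1})\}$ with filtration $T_r$ ($a\in1+\mathfrak{p}_E^{\lceil r\rceil}$), $Z\cong E^1$ the center; "minimal depth $r$" means depth on $T$ and depth on the split torus $\{\mathrm{diag}(a,a^{-1}):a\in F^\times\}$ both equal $r$. $\psi$: additive character of $E$ trivial on $\mathfrak{p}_E$, nontrivial on $\mathcal{O}_E$; $\Gamma$ realizes $\chi$ means $\chi(t)=\psi(\mathrm{Tr}(\Gamma(t-I)))$ for $t\in T_{r/2+}/T_{r+}$. For $X\in\mathfrak{k}_{-d}$, $\Psi_X(k)=\psi(\mathrm{Tr}(X(k-I)))$ on $\mathcal{J}_d=\begin{pmatrix}1+\mathfrak{p}_E^{\lceil d/2\rceil}&\mathfrak{p}_E^{\lceil d/2\rceil}\\ \mathfrak{p}_E^{\lceil (d+1)/2\rceil}&1+\mathfrak{p}_E^{\lceil d/2\rceil}\end{pmatrix}\cap G$; with $T(X)$ the centralizer of $X$ in $\mathcal{K}$ and $\zeta$ a character of $T(X)$ agreeing with $\Psi_X$ on $T(X)\cap\mathcal{J}_d$, $\mathcal{S}_d(X,\zeta)=\mathrm{Ind}_{T(X)\mathcal{J}_d}^{\mathcal{K}}\Psi_{X,\zeta}$.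 For the nilpotent $X_{\varpi^{-d}}$ the centralizer is $Z\mathcal{U}$ ($\mathcal{U}$ upper unipotent elements of $\mathcal{K}$), with $\theta$ extended trivially to $\mathcal{U}$. (The depth-zero assumption on $\theta$ can always be arranged after twisting by a character of $G$.) *)

theory Defs
  imports Complex_Main
begin

text \<open>E is modelled as a field type 'a with a discrete valuation v (only meaningful on
nonzero elements), the Galois conjugation cj of E/F, a uniformiser varpi of F (and of E,
since E/F is unramified) and an element s = sqrt(epsilon) with cj s = - s, epsilon = s^2 a
unit of F.  F is the fixed field of cj.\<close>

definition inP :: "('a::field \<Rightarrow> int) \<Rightarrow> int \<Rightarrow> 'a \<Rightarrow> bool" where
  "inP v n a \<longleftrightarrow> a = 0 \<or> v a \<ge> n"

definition v_cauchy :: "('a::field \<Rightarrow> int) \<Rightarrow> (nat \<Rightarrow> 'a) \<Rightarrow> bool" where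
  "v_cauchy v f \<longleftrightarrow> (\<forall>N. \<exists>M. \<forall>m\<ge>M. \<forall>n\<ge>M. inP v N (f m - f n))"

definition v_conv :: "('a::field \<Rightarrow> int) \<Rightarrow> (nat \<Rightarrow> 'a) \<Rightarrow> 'a \<Rightarrow> bool" where
  "v_conv v f L \<longleftrightarrow> (\<forall>N. \<exists>M. \<forall>n\<ge>M. inP v N (f n - L))"

definition unram_setup ::
  "('a::field \<Rightarrow> 'a) \<Rightarrow> ('a \<Rightarrow> int) \<Rightarrow> 'a \<Rightarrow> 'a \<Rightarrow> bool" where
  "unram_setup cj v varpi s \<longleftrightarrow>
     \<comment> \<open>cj is a field automorphism of order 2\<close>
     (\<forall>a b. cj (a + b) = cj a + cj b) \<and> (\<forall>a b. cj (a * b) = cj a * cj b) \<and>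
     (\<forall>a. cj (cj a) = a) \<and>
     \<comment> \<open>v is a (normalised, discrete) valuation on E, invariant under cj\<close>
     (\<forall>a b. a \<noteq> 0 \<longrightarrow> b \<noteq> 0 \<longrightarrow> v (a * b) = v a + v b) \<and>
     (\<forall>a b. a \<noteq> 0 \<longrightarrow> b \<noteq> 0 \<longrightarrow> a + b \<noteq> 0 \<longrightarrow> v (a + b) \<ge> min (v a) (v b)) \<and>
     (\<forall>a. a \<noteq> 0 \<longrightarrow> v (cj a) = v a) \<and>
     \<comment> \<open>E complete\<close>
     (\<forall>f. v_cauchy v f \<longrightarrow> (\<exists>L. v_conv v f L)) \<and>
     \<comment> \<open>finite residue field\<close>
     (\<exists>R. finite R \<and> (\<forall>a. inP v 0 a \<longrightarrow> (\<exists>r\<in>R. inP v 1 (a - r)))) \<and>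
     \<comment> \<open>p \<noteq> 2\<close>
     (2::'a) \<noteq> 0 \<and> v 2 = 0 \<and>
     \<comment> \<open>uniformiser of F which is also a uniformiser of E (E/F unramified)\<close>
     varpi \<noteq> 0 \<and> cj varpi = varpi \<and> v varpi = 1 \<and>
     \<comment> \<open>s = sqrt epsilon, epsilon = s^2 a unit of F, E = F[s]\<close>
     s \<noteq> 0 \<and> cj s = - s \<and> v s = 0"

datatype 'a m2 = M2 'a 'a 'a 'a   \<comment> \<open>M2 a b c d = [[a,b],[c,d]]\<close>

fun mmul :: "'a::field m2 \<Rightarrow> 'a m2 \<Rightarrow> 'a m2" where
  "mmul (M2 a b c d) (M2 e f g h) = M2 (a*e + b*g) (a*f + b*h) (c*e + d*g) (c*f + d*h)"

fun msub :: "'a::field m2 \<Rightarrow> 'a m2 \<Rightarrow> 'a m2" where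
  "msub (M2 a b c d) (M2 e f g h) = M2 (a - e) (b - f) (c - g) (d - h)"

fun mtrace :: "'a::field m2 \<Rightarrow> 'a" where
  "mtrace (M2 a b c d) = a + d"

fun m11 :: "'a m2 \<Rightarrow> 'a" where
  "m11 (M2 a b c d) = a"

fun minv :: "'a::field m2 \<Rightarrow> 'a m2" where
  "minv (M2 a b c d) = (let e = a*d - b*c in M2 (d/e) (-b/e) (-c/e) (a/e))"

fun mstar :: "('a \<Rightarrow> 'a) \<Rightarrow> 'a m2 \<Rightarrow> 'a m2" where
  "mstar cj (M2 a b c d) = M2 (cj a) (cj c) (cj b) (cj d)"

definition mI :: "'a::field m2" where "mI = M2 1 0 0 1"
definition wmat :: "'a::field m2" where "wmat = M2 0 1 1 0"

definition setprod :: "'a::field m2 set \<Rightarrow> 'a m2 set \<Rightarrow> 'a m2 set" where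
  "setprod A B = {mmul a b | a b. a \<in> A \<and> b \<in> B}"

definition UG :: "('a::field \<Rightarrow> 'a) \<Rightarrow> 'a m2 set" where
  "UG cj = {g. mmul (mstar cj g) (mmul wmat g) = wmat}"

fun entries_in :: "('a \<Rightarrow> bool) \<Rightarrow> 'a m2 \<Rightarrow> bool" where
  "entries_in P (M2 a b c d) \<longleftrightarrow> P a \<and> P b \<and> P c \<and> P d"

definition Kc :: "('a::field \<Rightarrow> 'a) \<Rightarrow> ('a \<Rightarrow> int) \<Rightarrow> 'a m2 set" where
  "Kc cj v = {g \<in> UG cj. entries_in (inP v 0) g}"

definition Ttor :: "('a::field \<Rightarrow> 'a) \<Rightarrow> 'a m2 set" where
  "Ttor cj = {M2 a 0 0 (inverse (cj a)) | a. a \<noteq> 0}"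

definition Tfil :: "('a::field \<Rightarrow> 'a) \<Rightarrow> ('a \<Rightarrow> int) \<Rightarrow> int \<Rightarrow> 'a m2 set" where
  "Tfil cj v n = {M2 a 0 0 (inverse (cj a)) | a. a \<noteq> 0 \<and> inP v n (a - 1)}"

text \<open>Filtration of the split torus {diag(a,a^-1) : a \<in> F^x}: a \<in> 1 + p_F^n.\<close>
definition Sfil :: "('a::field \<Rightarrow> 'a) \<Rightarrow> ('a \<Rightarrow> int) \<Rightarrow> int \<Rightarrow> 'a m2 set" where
  "Sfil cj v n = {M2 a 0 0 (inverse a) | a. a \<noteq> 0 \<and> cj a = a \<and> inP v n (a - 1)}"

text \<open>Z_{0+} = Z \<inter> T_{0+}, Z = {diag(z,z) : z \<in> E^1}.\<close>
definition Zfil1 :: "('a::field \<Rightarrow> 'a) \<Rightarrow> ('a \<Rightarrow> int) \<Rightarrow> 'a m2 set" where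
  "Zfil1 cj v = {M2 a 0 0 a | a. a * cj a = 1 \<and> inP v 1 (a - 1)}"

text \<open>J_d (d a positive integer): ceil(d/2) = (d+1) div 2, ceil((d+1)/2) = (d+2) div 2.\<close>
definition Jd :: "('a::field \<Rightarrow> 'a) \<Rightarrow> ('a \<Rightarrow> int) \<Rightarrow> nat \<Rightarrow> 'a m2 set" where
  "Jd cj v d = {g \<in> UG cj. case g of M2 a b c e \<Rightarrow>
      inP v ((int d + 1) div 2) (a - 1) \<and> inP v ((int d + 1) div 2) b \<and>
      inP v ((int d + 2) div 2) c \<and> inP v ((int d + 1) div 2) (e - 1)}"

definition is_char_on :: "'a::field m2 set \<Rightarrow> ('a m2 \<Rightarrow> complex) \<Rightarrow> bool" where
  "is_char_on H \<chi> \<longleftrightarrow> (\<forall>x\<in>H. \<chi> x \<noteq> 0) \<and> (\<forall>x\<in>H. \<forall>y\<in>H. \<chi> (mmul x y) = \<chi> x * \<chi> y)"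

definition psi_ok :: "('a::field \<Rightarrow> int) \<Rightarrow> ('a \<Rightarrow> complex) \<Rightarrow> bool" where
  "psi_ok v \<psi> \<longleftrightarrow> (\<forall>a b. \<psi> (a + b) = \<psi> a * \<psi> b) \<and> (\<forall>a. cmod (\<psi> a) = 1) \<and>
     (\<forall>a. inP v 1 a \<longrightarrow> \<psi> a = 1) \<and> (\<exists>a. inP v 0 a \<and> \<psi> a \<noteq> 1)"

text \<open>Minimal depth r (r a positive integer): depth r on T and on the split torus.\<close>
definition min_depth :: "('a::field \<Rightarrow> 'a) \<Rightarrow> ('a \<Rightarrow> int) \<Rightarrow> ('a m2 \<Rightarrow> complex) \<Rightarrow> nat \<Rightarrow> bool" where
  "min_depth cj v \<chi> r \<longleftrightarrow>
     (\<forall>t\<in>Tfil cj v (int r + 1). \<chi> t = 1) \<and> (\<exists>t\<in>Tfil cj v (int r). \<chi> t \<noteq> 1) \<and>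
     (\<forall>t\<in>Sfil cj v (int r + 1). \<chi> t = 1) \<and> (\<exists>t\<in>Sfil cj v (int r). \<chi> t \<noteq> 1)"

definition PsiX :: "('a::field \<Rightarrow> complex) \<Rightarrow> 'a m2 \<Rightarrow> 'a m2 \<Rightarrow> complex" where
  "PsiX \<psi> X k = \<psi> (mtrace (mmul X (msub k mI)))"

definition TX :: "('a::field \<Rightarrow> 'a) \<Rightarrow> ('a \<Rightarrow> int) \<Rightarrow> 'a m2 \<Rightarrow> 'a m2 set" where
  "TX cj v X = {k \<in> Kc cj v. mmul k X = mmul X k}"

definition PsiXz :: "('a::field \<Rightarrow> 'a) \<Rightarrow> ('a \<Rightarrow> int) \<Rightarrow> ('a \<Rightarrow> complex) \<Rightarrow> nat \<Rightarrow>
    'a m2 \<Rightarrow> ('a m2 \<Rightarrow> complex) \<Rightarrow> 'a m2 \<Rightarrow> complex" where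
  "PsiXz cj v \<psi> d X \<zeta> h =
     (let p = (SOME p. fst p \<in> TX cj v X \<and> snd p \<in> Jd cj v d \<and> h = mmul (fst p) (snd p))
      in \<zeta> (fst p) * PsiX \<psi> X (snd p))"

definition Sd :: "('a::field \<Rightarrow> 'a) \<Rightarrow> ('a \<Rightarrow> int) \<Rightarrow> ('a \<Rightarrow> complex) \<Rightarrow> nat \<Rightarrow>
    'a m2 \<Rightarrow> ('a m2 \<Rightarrow> complex) \<Rightarrow> ('a m2 \<Rightarrow> complex) set" where
  "Sd cj v \<psi> d X \<zeta> =
     {f. (\<forall>h\<in>setprod (TX cj v X) (Jd cj v d). \<forall>k\<in>Kc cj v.
            f (mmul h k) = PsiXz cj v \<psi> d X \<zeta> h * f k) \<and>
         (\<forall>k. k \<notin> Kc cj v \<longrightarrow> f k = 0)}"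

definition ract :: "'a::field m2 set \<Rightarrow> 'a m2 \<Rightarrow> ('a m2 \<Rightarrow> complex) \<Rightarrow> ('a m2 \<Rightarrow> complex)" where
  "ract K k f = (\<lambda>x. if x \<in> K then f (mmul x k) else 0)"

definition rep_iso :: "'a::field m2 set \<Rightarrow> ('a m2 \<Rightarrow> complex) set \<Rightarrow> ('a m2 \<Rightarrow> complex) set \<Rightarrow> bool" where
  "rep_iso K V W \<longleftrightarrow> (\<exists>\<Phi>. bij_betw \<Phi> V W \<and>
     (\<forall>f\<in>V. \<forall>g\<in>V. \<Phi> (\<lambda>x. f x + g x) = (\<lambda>x. \<Phi> f x + \<Phi> g x)) \<and>
     (\<forall>c. \<forall>f\<in>V. \<Phi> (\<lambda>x. c * f x) = (\<lambda>x. c * \<Phi> f x)) \<and>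
     (\<forall>k\<in>K. \<forall>f\<in>V. \<Phi> (ract K k f) = ract K k (\<Phi> f)))"

end

theory Submission
  imports Defs
begin


locale uset =
  fixes cj :: "'a::field \<Rightarrow> 'a" and v :: "'a \<Rightarrow> int" and varpi s :: 'a
  assumes hset: "unram_setup cj v varpi s"
begin

lemma cj_add[simp]: "cj (a + b) = cj a + cj b" using hset unfolding unram_setup_def by blast
lemma cj_mult[simp]: "cj (a * b) = cj a * cj b" using hset unfolding unram_setup_def by blast
lemma cj_cj[simp]: "cj (cj a) = a" using hset unfolding unram_setup_def by blast
lemma v_mult: "a \<noteq> 0 \<Longrightarrow> b \<noteq> 0 \<Longrightarrow> v (a * b) = v a + v b" using hset unfolding unram_setup_def by blast
lemma v_ultra: "a \<noteq> 0 \<Longrightarrow> b \<noteq> 0 \<Longrightarrow> a + b \<noteq> 0 \<Longrightarrow> v (a + b) \<ge> min (v a) (v b)"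
  using hset unfolding unram_setup_def by blast
lemma v_cj[simp]: "v (cj a) = v a"
proof (cases "a = 0")
  case True
  have "cj 0 = 0" by (metis add_cancel_right_right cj_add)
  then show ?thesis using True by simp
next
  case False then show ?thesis using hset unfolding unram_setup_def by blast
qed
lemma residue: "\<exists>R. finite R \<and> (\<forall>a. inP v 0 a \<longrightarrow> (\<exists>r\<in>R. inP v 1 (a - r)))"
  using hset unfolding unram_setup_def by blast
lemma two_ne[simp]: "(2::'a) \<noteq> 0" using hset unfolding unram_setup_def by blast
lemma v2[simp]: "v 2 = 0" using hset unfolding unram_setup_def by blast
lemma varpi_ne[simp]: "varpi \<noteq> 0" using hset unfolding unram_setup_def by blast
lemma cj_varpi[simp]: "cj varpi = varpi" using hset unfolding unram_setup_def by blast
lemma v_varpi[simp]: "v varpi = 1" using hset unfolding unram_setup_def by blast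
lemma s_ne[simp]: "s \<noteq> 0" using hset unfolding unram_setup_def by blast
lemma cj_s[simp]: "cj s = - s" using hset unfolding unram_setup_def by blast
lemma v_s[simp]: "v s = 0" using hset unfolding unram_setup_def by blast

lemma four_ne[simp]: "(4::'a) \<noteq> 0"
proof -
  have "(4::'a) = 2 * 2" by simp
  then show ?thesis using two_ne by (metis mult_eq_0_iff)
qed
lemma v4[simp]: "v 4 = 0"
proof -
  have "(4::'a) = 2 * 2" by simp
  then show ?thesis using v_mult[of 2 2] by simp
qed

lemma cj_0[simp]: "cj 0 = 0" by (metis add_cancel_right_right cj_add)
lemma cj_neg[simp]: "cj (- a) = - cj a" by (metis add_eq_0_iff cj_0 cj_add)
lemma cj_diff[simp]: "cj (a - b) = cj a - cj b" by (metis cj_add cj_neg diff_conv_add_uminus)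
lemma cj_eq0[simp]: "cj a = 0 \<longleftrightarrow> a = 0" by (metis cj_0 cj_cj)
lemma cj_1[simp]: "cj 1 = 1"
proof -
  have "cj 1 * cj 1 = cj 1" by (metis cj_mult mult_1)
  moreover have "cj 1 \<noteq> 0" by (metis cj_eq0 one_neq_zero)
  ultimately show ?thesis by (metis mult_cancel_left2)
qed
lemma cj_inverse[simp]: "cj (inverse a) = inverse (cj a)"
proof (cases "a = 0")
  case True then show ?thesis by simp
next
  case False
  have "cj a * cj (inverse a) = 1" by (metis False cj_1 cj_mult right_inverse)
  then show ?thesis by (metis inverse_unique)
qed
lemma cj_divide[simp]: "cj (a / b) = cj a / cj b" by (simp add: divide_inverse)
lemma cj_2[simp]: "cj 2 = 2" by (metis cj_1 cj_add one_add_one)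
lemma cj_power[simp]: "cj (a ^ n) = cj a ^ n" by (induction n) auto



lemma v_1[simp]: "v 1 = 0" using v_mult[of 1 1] by simp
lemma v_m1[simp]: "v (-1) = 0" using v_mult[of "-1" "-1"] by simp
lemma v_neg[simp]: "v (- a) = v a"
proof (cases "a = 0")
  case False then show ?thesis using v_mult[of "-1" a] by simp
qed simp
lemma v_inverse: "a \<noteq> 0 \<Longrightarrow> v (inverse a) = - v a"
  using v_mult[of a "inverse a"] by simp
lemma v_divide: "a \<noteq> 0 \<Longrightarrow> b \<noteq> 0 \<Longrightarrow> v (a / b) = v a - v b"
  by (simp add: divide_inverse v_mult v_inverse)
lemma v_power: "a \<noteq> 0 \<Longrightarrow> v (a ^ n) = int n * v a"
  by (induction n) (auto simp: v_mult algebra_simps)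

lemma inP_0[simp]: "inP v n 0" by (simp add: inP_def)
lemma inP_add: "inP v n a \<Longrightarrow> inP v n b \<Longrightarrow> inP v n (a + b)"
  unfolding inP_def using v_ultra[of a b] by fastforce
lemma inP_neg[simp]: "inP v n (- a) \<longleftrightarrow> inP v n a" by (auto simp: inP_def)
lemma inP_diff: "inP v n a \<Longrightarrow> inP v n b \<Longrightarrow> inP v n (a - b)"
  using inP_add[of n a "-b"] by simp
lemma inP_mult: "inP v m a \<Longrightarrow> inP v n b \<Longrightarrow> inP v (m + n) (a * b)"
  unfolding inP_def by (cases "a = 0"; cases "b = 0") (auto simp: v_mult)
lemma inP_mono: "m \<le> n \<Longrightarrow> inP v n a \<Longrightarrow> inP v m a" unfolding inP_def by auto
lemma inP_cj[simp]: "inP v n (cj a) \<longleftrightarrow> inP v n a" by (auto simp: inP_def)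
lemma inP_multu: "u \<noteq> 0 \<Longrightarrow> v u = 0 \<Longrightarrow> inP v n (a * u) \<longleftrightarrow> inP v n a"
  unfolding inP_def by (cases "a = 0") (auto simp: v_mult)
lemma inP_multu2: "u \<noteq> 0 \<Longrightarrow> v u = 0 \<Longrightarrow> inP v n (u * a) \<longleftrightarrow> inP v n a"
  by (metis inP_multu mult.commute)
lemma inP_divu: "u \<noteq> 0 \<Longrightarrow> v u = 0 \<Longrightarrow> inP v n (a / u) \<longleftrightarrow> inP v n a"
  using inP_multu[of "inverse u"] by (simp add: divide_inverse v_inverse)
lemma inP_mult0: "inP v n a \<Longrightarrow> inP v 0 b \<Longrightarrow> inP v n (a * b)"
  using inP_mult[of n a 0 b] by simp
lemma inP_mult0': "inP v 0 a \<Longrightarrow> inP v n b \<Longrightarrow> inP v n (a * b)"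
  using inP_mult[of 0 a n b] by simp
lemma inP_prime: "inP v 0 a \<Longrightarrow> inP v 0 b \<Longrightarrow> inP v 1 (a * b) \<Longrightarrow> inP v 1 a \<or> inP v 1 b"
  unfolding inP_def by (cases "a = 0"; cases "b = 0") (auto simp: v_mult)
lemma v_add_strict: "a \<noteq> 0 \<Longrightarrow> inP v (v a + 1) b \<Longrightarrow> a + b \<noteq> 0 \<and> v (a + b) = v a"
proof -
  assume a: "a \<noteq> 0" and b: "inP v (v a + 1) b"
  show ?thesis
  proof (cases "b = 0")
    case True then show ?thesis using a by simp
  next
    case False
    then have vb: "v b > v a" using b by (auto simp: inP_def)
    have ne: "a + b \<noteq> 0"
    proof
      assume "a + b = 0" then have "b = - a" by (simp add: add_eq_0_iff)
      then show False using vb by simp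
    qed
    have "v (a + b) \<ge> v a" using v_ultra[OF a False ne] vb by simp
    moreover have "v a \<ge> min (v (a + b)) (v b)" using v_ultra[of "a + b" "- b"] ne False a by simp
    ultimately show ?thesis using vb ne by linarith
  qed
qed
lemma unit_add: "a \<noteq> 0 \<Longrightarrow> v a = 0 \<Longrightarrow> inP v 1 b \<Longrightarrow> a + b \<noteq> 0 \<and> v (a + b) = 0"
  using v_add_strict[of a b] by simp
lemma unit_of_cong: "a \<noteq> 0 \<Longrightarrow> v a = 0 \<Longrightarrow> inP v 1 (b - a) \<Longrightarrow> b \<noteq> 0 \<and> v b = 0"
  using unit_add[of a "b - a"] by simp
lemma unit_inP0: "v a = 0 \<Longrightarrow> inP v 0 a" by (simp add: inP_def)
lemma inP_int_iff: "inP v 0 a \<Longrightarrow> \<not> inP v 1 a \<Longrightarrow> a \<noteq> 0 \<and> v a = 0"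
  by (auto simp: inP_def)

end


lemma fiber_count:
  assumes fin: "finite Q" and x0: "x0 \<in> Q"
    and two: "\<forall>x\<in>Q. \<forall>y\<in>Q. f x = f y \<longrightarrow> y = x \<or> y = \<sigma> x"
    and one: "\<forall>x\<in>Q. f x = f x0 \<longrightarrow> x = x0"
  shows "card Q + 1 \<le> 2 * card (f ` Q)"
proof -
  let ?Q = "Q - {x0}"
  have sub: "?Q \<subseteq> (\<Union>y\<in>f ` ?Q. {x\<in>?Q. f x = y})" by auto
  have "card ?Q \<le> card (\<Union>y\<in>f ` ?Q. {x\<in>?Q. f x = y})"
    by (rule card_mono) (use fin in auto)
  also have "\<dots> \<le> (\<Sum>y\<in>f ` ?Q. card {x\<in>?Q. f x = y})"
    by (rule card_UN_le) (use fin in auto)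
  also have "\<dots> \<le> (\<Sum>y\<in>f ` ?Q. 2)"
  proof (rule sum_mono)
    fix y assume "y \<in> f ` ?Q"
    then obtain x1 where x1: "x1 \<in> ?Q" "y = f x1" by auto
    have "{x\<in>?Q. f x = y} \<subseteq> {x1, \<sigma> x1}" using two x1 by fastforce
    then have "card {x\<in>?Q. f x = y} \<le> card {x1, \<sigma> x1}" by (rule card_mono[rotated]) simp
    also have "\<dots> \<le> 2" by (cases "x1 = \<sigma> x1") auto
    finally show "card {x\<in>?Q. f x = y} \<le> 2" .
  qed
  also have "\<dots> = 2 * card (f ` ?Q)" by simp
  finally have A: "card ?Q \<le> 2 * card (f ` ?Q)" .
  have "f ` ?Q \<subseteq> f ` Q - {f x0}" using one by auto
  then have "card (f ` ?Q) \<le> card (f ` Q - {f x0})" by (rule card_mono[rotated]) (use fin in simp)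
  also have "\<dots> = card (f ` Q) - 1" using x0 by (simp add: card_Diff_singleton)
  finally have B: "card (f ` ?Q) \<le> card (f ` Q) - 1" .
  have C: "card ?Q = card Q - 1" using x0 by (simp add: card_Diff_singleton)
  have "card Q \<ge> 1" using x0 fin by (metis One_nat_def Suc_leI card_gt_0_iff empty_iff)
  moreover have "card (f ` Q) \<ge> 1" using x0 fin by (metis One_nat_def Suc_leI card_gt_0_iff empty_iff finite_imageI image_eqI)
  ultimately show ?thesis using A B C by linarith
qed

context uset begin

lemma sqrt_lift:
  assumes "cj a = a" "cj u = u" "a \<noteq> 0" "v a = 0" "inP v 1 (a*a - u)"
  shows "\<exists>b. cj b = b \<and> b \<noteq> 0 \<and> v b = 0 \<and> inP v 1 (b - a) \<and> inP v (int k + 1) (b*b - u)"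
proof (induction k)
  case 0 then show ?case using assms by (intro exI[of _ a]) simp
next
  case (Suc k)
  then obtain b where b: "cj b = b" "b \<noteq> 0" "v b = 0" "inP v 1 (b - a)" "inP v (int k + 1) (b*b - u)"
    by blast
  define \<delta> where "\<delta> = (b*b - u) / (2*b)"
  have u2b: "2*b \<noteq> 0" "v (2*b) = 0" using b by (auto simp: v_mult)
  have d1: "inP v (int k + 1) \<delta>" unfolding \<delta>_def using b(5) inP_divu[OF u2b] by simp
  have e: "(b - \<delta>) * (b - \<delta>) - u = \<delta> * \<delta>" unfolding \<delta>_def using b(2)
    by (simp add: field_simps)
  have "inP v ((int k + 1) + (int k + 1)) (\<delta> * \<delta>)" by (rule inP_mult[OF d1 d1])
  then have E: "inP v (int (Suc k) + 1) ((b - \<delta>) * (b - \<delta>) - u)" unfolding e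
    by (rule inP_mono[rotated]) simp
  have d0: "inP v 1 \<delta>" using inP_mono[OF _ d1] by simp
  have ba: "inP v 1 ((b - \<delta>) - a)" using inP_diff[OF b(4) d0] by (simp add: algebra_simps)
  have un: "b - \<delta> \<noteq> 0 \<and> v (b - \<delta>) = 0" using unit_of_cong[OF assms(3,4) ba] .
  have cjd: "cj \<delta> = \<delta>" unfolding \<delta>_def using b(1) assms(2) by simp
  show ?case using E ba un cjd b(1) by (intro exI[of _ "b - \<delta>"]) simp
qed

lemma norm_mod_p:
  "\<exists>a b. cj a = a \<and> cj b = b \<and> inP v 0 a \<and> inP v 0 b \<and> inP v 1 (a*a - s*s*(b*b) + 1)"
proof -
  obtain R where R: "finite R" "\<forall>a. inP v 0 a \<longrightarrow> (\<exists>r\<in>R. inP v 1 (a - r))" using residue by blast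
  define OF where "OF = {a. cj a = a \<and> inP v 0 a}"
  define RF where "RF = {x \<in> (\<lambda>r. (r + cj r)/2) ` R. cj x = x \<and> inP v 0 x}"
  have finRF: "finite RF" unfolding RF_def using R(1) by simp
  have RFOF: "RF \<subseteq> OF" unfolding RF_def OF_def by auto
  have cover: "\<exists>x\<in>RF. inP v 1 (a - x)" if "a \<in> OF" for a
  proof -
    from that have a: "cj a = a" "inP v 0 a" unfolding OF_def by auto
    obtain r where r: "r \<in> R" "inP v 1 (a - r)" using R(2) a(2) by blast
    have "inP v 1 (cj (a - r))" using r(2) by (simp only: inP_cj)
    then have r2: "inP v 1 (a - cj r)" using a(1) by simp
    have e: "a - (r + cj r)/2 = ((a - r) + (a - cj r)) / 2" by (simp add: field_simps)
    have x1: "inP v 1 (a - (r + cj r)/2)" unfolding e using inP_add[OF r(2) r2] inP_divu[of 2] by simp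
    have "inP v 0 (a - (a - (r + cj r)/2))" using inP_diff[OF a(2) inP_mono[OF _ x1]] by simp
    then have x0: "inP v 0 ((r + cj r)/2)" by simp
    have "cj ((r + cj r)/2) = (r + cj r)/2" by (simp add: add.commute)
    then have "(r + cj r)/2 \<in> RF" unfolding RF_def using r(1) x0 by auto
    then show ?thesis using x1 by blast
  qed
  define cr where "cr a = (SOME x. x \<in> RF \<and> inP v 1 (a - x))" for a
  have cr_spec: "cr a \<in> RF \<and> inP v 1 (a - cr a)" if "a \<in> OF" for a
    unfolding cr_def using cover[OF that] by (rule someI2_bex) auto
  have cr_eq: "cr a = cr b" if "inP v 1 (a - b)" for a b
  proof -
    have "(\<lambda>x. x \<in> RF \<and> inP v 1 (a - x)) = (\<lambda>x. x \<in> RF \<and> inP v 1 (b - x))"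
    proof (rule ext)
      fix x
      have "inP v 1 (a - x) \<longleftrightarrow> inP v 1 (b - x)"
      proof
        assume h: "inP v 1 (a - x)"
        have "b - x = (a - x) - (a - b)" by simp
        then show "inP v 1 (b - x)" using inP_diff[OF h that] by simp
      next
        assume h: "inP v 1 (b - x)"
        have "a - x = (a - b) + (b - x)" by simp
        then show "inP v 1 (a - x)" using inP_add[OF that h] by simp
      qed
      then show "(x \<in> RF \<and> inP v 1 (a - x)) = (x \<in> RF \<and> inP v 1 (b - x))" by simp
    qed
    then show ?thesis unfolding cr_def by simp
  qed
  define Q where "Q = cr ` RF"
  have finQ: "finite Q" unfolding Q_def using finRF by simp
  have QRF: "Q \<subseteq> RF" unfolding Q_def using cr_spec RFOF by auto
  have QOF: "Q \<subseteq> OF" using QRF RFOF by auto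
  have crfix: "cr x = x" if xQ: "x \<in> Q" for x
  proof -
    obtain y where y: "y \<in> RF" "x = cr y" using xQ unfolding Q_def by auto
    have "inP v 1 (y - x)" using cr_spec[of y] y RFOF by auto
    then have "inP v 1 (x - y)" by (metis inP_neg minus_diff_eq)
    then show ?thesis using cr_eq y(2) by metis
  qed
  have crQ: "cr a \<in> Q" if "a \<in> OF" for a
  proof -
    have "cr a \<in> RF" using cr_spec[OF that] by simp
    moreover have "cr (cr a) = cr a"
    proof -
      have "inP v 1 (a - cr a)" using cr_spec[OF that] by simp
      then have "inP v 1 (cr a - a)" by (metis inP_neg minus_diff_eq)
      then show ?thesis using cr_eq by metis
    qed
    ultimately show ?thesis unfolding Q_def by (metis image_eqI)
  qed
  have OF_mem: "a \<in> OF \<longleftrightarrow> cj a = a \<and> inP v 0 a" for a unfolding OF_def by simp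
  have int_mul: "inP v 0 (a * b)" if "inP v 0 a" "inP v 0 b" for a b using inP_mult[OF that] by simp
  have ss: "cj (s*s) = s*s" "inP v 0 (s*s)" "s * s \<noteq> 0" "v (s*s) = 0"
    by (auto simp: inP_def v_mult)
  have crcong: "inP v 1 (a - b)" if "a \<in> OF" "b \<in> OF" "cr a = cr b" for a b
  proof -
    have "inP v 1 ((a - cr a) - (b - cr b))" using inP_diff cr_spec that by blast
    then show ?thesis using that(3) by simp
  qed
  have sq_two: "y = x \<or> y = cr (- x)" if xy: "x \<in> Q" "y \<in> Q" "inP v 1 (x*x - y*y)" for x y
  proof -
    have xo: "cj x = x" "inP v 0 x" "cj y = y" "inP v 0 y" using xy QOF OF_mem by auto
    have "x*x - y*y = (x - y) * (x + y)" by (simp add: algebra_simps)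
    then have "inP v 1 (x - y) \<or> inP v 1 (x + y)"
      using inP_prime[OF inP_diff[OF xo(2,4)] inP_add[OF xo(2,4)]] xy(3) by simp
    then show ?thesis
    proof
      assume "inP v 1 (x - y)" then have "cr x = cr y" by (rule cr_eq)
      then show ?thesis using crfix xy by simp
    next
      assume "inP v 1 (x + y)" then have "inP v 1 (y - (- x))" by (simp add: add.commute)
      then have "cr y = cr (- x)" by (rule cr_eq)
      then show ?thesis using crfix xy by simp
    qed
  qed
  have sq_zero: "x = cr 0" if xy: "x \<in> Q" "inP v 1 (x*x)" for x
  proof -
    have xo: "inP v 0 x" using xy QOF OF_mem by auto
    have "inP v 1 x" using inP_prime[OF xo xo xy(2)] by simp
    then have "cr x = cr 0" by (intro cr_eq) simp
    then show ?thesis using crfix xy by simp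
  qed
  define f where "f a = cr (a * a)" for a
  define g where "g b = cr (s*s*(b*b) - 1)" for b
  have fOF: "a*a \<in> OF" if "a \<in> Q" for a using that QOF int_mul by (auto simp: OF_def)
  have gOF: "s*s*(b*b) - 1 \<in> OF" if "b \<in> Q" for b
    using that QOF int_mul ss by (auto simp: OF_def intro!: inP_diff) (simp add: inP_def)
  have x0: "cr 0 \<in> Q" by (rule crQ) (simp add: OF_def)
  have cf: "card Q + 1 \<le> 2 * card (f ` Q)"
  proof (rule fiber_count[OF finQ x0, where \<sigma> = "\<lambda>x. cr (- x)"])
    show "\<forall>x\<in>Q. \<forall>y\<in>Q. f x = f y \<longrightarrow> y = x \<or> y = cr (- x)"
      using sq_two crcong fOF unfolding f_def by blast
    show "\<forall>x\<in>Q. f x = f (cr 0) \<longrightarrow> x = cr 0"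
    proof (intro ballI impI)
      fix x assume x: "x \<in> Q" "f x = f (cr 0)"
      have "inP v 1 (x*x - cr 0 * cr 0)" using crcong fOF x x0 unfolding f_def by blast
      moreover have "inP v 1 (cr 0 * cr 0)"
        using cr_spec[of 0] inP_mult[of 1 "cr 0" 0 "cr 0"] x0 QOF OF_mem by (auto simp: OF_def)
      ultimately have "inP v 1 (x*x)" using inP_add by fastforce
      then show "x = cr 0" using sq_zero x by blast
    qed
  qed
  have cg: "card Q + 1 \<le> 2 * card (g ` Q)"
  proof (rule fiber_count[OF finQ x0, where \<sigma> = "\<lambda>x. cr (- x)"])
    have red: "inP v 1 (x*x - y*y)" if "x \<in> Q" "y \<in> Q" "g x = g y" for x y
    proof -
      have "inP v 1 ((s*s*(x*x) - 1) - (s*s*(y*y) - 1))" using crcong gOF that unfolding g_def by blast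
      then have "inP v 1 ((x*x - y*y) * (s*s))" by (simp add: algebra_simps)
      then show ?thesis using inP_multu ss by blast
    qed
    show "\<forall>x\<in>Q. \<forall>y\<in>Q. g x = g y \<longrightarrow> y = x \<or> y = cr (- x)"
      using sq_two red by blast
    show "\<forall>x\<in>Q. g x = g (cr 0) \<longrightarrow> x = cr 0"
    proof (intro ballI impI)
      fix x assume x: "x \<in> Q" "g x = g (cr 0)"
      have "inP v 1 (x*x - cr 0 * cr 0)" using red x x0 by blast
      moreover have "inP v 1 (cr 0 * cr 0)"
        using cr_spec[of 0] inP_mult[of 1 "cr 0" 0 "cr 0"] x0 QOF OF_mem by (auto simp: OF_def)
      ultimately have "inP v 1 (x*x)" using inP_add by fastforce
      then show "x = cr 0" using sq_zero x by blast
    qed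
  qed
  have fQ: "f ` Q \<subseteq> Q" using fOF crQ unfolding f_def by auto
  have gQ: "g ` Q \<subseteq> Q" using gOF crQ unfolding g_def by auto
  have "f ` Q \<inter> g ` Q \<noteq> {}"
  proof
    assume dis: "f ` Q \<inter> g ` Q = {}"
    have "card (f ` Q \<union> g ` Q) = card (f ` Q) + card (g ` Q)"
      by (rule card_Un_disjoint) (use finQ dis in auto)
    moreover have "card (f ` Q \<union> g ` Q) \<le> card Q" by (rule card_mono[OF finQ]) (use fQ gQ in auto)
    ultimately show False using cf cg by linarith
  qed
  then obtain a b where ab: "a \<in> Q" "b \<in> Q" "f a = g b" by blast
  have "inP v 1 (a*a - (s*s*(b*b) - 1))" using crcong fOF gOF ab unfolding f_def g_def by blast
  then have "inP v 1 (a*a - s*s*(b*b) + 1)" by (simp add: algebra_simps)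
  then show ?thesis using ab QOF OF_mem by blast
qed

lemma norm_from_ab:
  assumes "cj a = a" "cj b = b" "inP v n (a*a - s*s*(b*b) + 1)" "n \<ge> 1"
  shows "\<exists>\<mu>. \<mu> \<noteq> 0 \<and> v \<mu> = 0 \<and> inP v n (\<mu> * cj \<mu> * (s*s) - 1)"
proof -
  define \<mu> where "\<mu> = (a + b*s)/s"
  have e: "\<mu> * cj \<mu> * (s*s) - 1 = - (a*a - s*s*(b*b) + 1)"
    unfolding \<mu>_def using assms(1,2) by (simp add: field_simps)
  have X: "inP v n (\<mu> * cj \<mu> * (s*s) - 1)" unfolding e using assms(3) inP_neg by blast
  have X1: "inP v 1 (\<mu> * cj \<mu> * (s*s) - 1)" using inP_mono[OF assms(4) X] .
  have u: "\<mu> * cj \<mu> * (s*s) \<noteq> 0 \<and> v (\<mu> * cj \<mu> * (s*s)) = 0"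
    using unit_of_cong[of 1 "\<mu> * cj \<mu> * (s*s)"] X1 by simp
  then have m0: "\<mu> \<noteq> 0" by auto
  have "v (\<mu> * cj \<mu> * (s*s)) = v \<mu> + v \<mu>" using m0 by (simp add: v_mult)
  then have "v \<mu> = 0" using u by simp
  then show ?thesis using m0 X by blast
qed

lemma norm_exists: "\<exists>\<mu>. \<mu> \<noteq> 0 \<and> v \<mu> = 0 \<and> inP v n (\<mu> * cj \<mu> * (s*s) - 1)"
proof -
  obtain a b where ab: "cj a = a" "cj b = b" "inP v 0 a" "inP v 0 b" "inP v 1 (a*a - s*s*(b*b) + 1)"
    using norm_mod_p by blast
  define k where "k = nat n"
  have kn: "int k + 1 \<ge> n" "int k + 1 \<ge> 1" unfolding k_def by auto
  have ss: "cj (s*s) = s*s" "inP v 0 (s*s)" "s * s \<noteq> 0" "v (s*s) = 0"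
    by (auto simp: inP_def v_mult)
  have "\<exists>\<mu>. \<mu> \<noteq> 0 \<and> v \<mu> = 0 \<and> inP v (int k + 1) (\<mu> * cj \<mu> * (s*s) - 1)"
  proof (cases "inP v 1 a")
    case False
    then have au: "a \<noteq> 0" "v a = 0" using inP_int_iff ab(3) by auto
    define u where "u = s*s*(b*b) - 1"
    have "inP v 1 (a*a - u)" unfolding u_def using ab(5) by (simp add: algebra_simps)
    then obtain a' where a': "cj a' = a'" "inP v (int k + 1) (a'*a' - u)"
      using sqrt_lift[OF ab(1) _ au, of u k] ab(2) unfolding u_def by auto
    have e: "a'*a' - s*s*(b*b) + 1 = a'*a' - u" unfolding u_def by simp
    have "inP v (int k + 1) (a'*a' - s*s*(b*b) + 1)" unfolding e by (rule a'(2))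
    then show ?thesis using norm_from_ab[OF a'(1) ab(2), of "int k + 1"] kn by blast
  next
    case True
    have "\<not> inP v 1 b"
    proof
      assume b1: "inP v 1 b"
      have "inP v 1 (a*a - s*s*(b*b))"
        using inP_diff[OF inP_mult0[OF True ab(3)] inP_mult0'[OF ss(2) inP_mult0[OF b1 ab(4)]]] by simp
      then have "inP v 1 ((a*a - s*s*(b*b) + 1) - (a*a - s*s*(b*b)))" using inP_diff ab(5) by blast
      then show False by (simp add: inP_def)
    qed
    then have bu: "b \<noteq> 0" "v b = 0" using inP_int_iff ab(4) by auto
    define u where "u = (a*a + 1) / (s*s)"
    have e: "b*b - u = - (a*a - s*s*(b*b) + 1) / (s*s)" unfolding u_def by (simp add: field_simps)
    have "inP v 1 (- (a*a - s*s*(b*b) + 1))" using ab(5) inP_neg by blast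
    then have "inP v 1 (b*b - u)" unfolding e using inP_divu[OF ss(3,4)] by blast
    then obtain b' where b': "cj b' = b'" "inP v (int k + 1) (b'*b' - u)"
      using sqrt_lift[OF ab(2) _ bu, of u k] ab(1) ss(1) unfolding u_def by auto
    have "a*a - s*s*(b'*b') + 1 = - (s*s) * (b'*b' - u)" unfolding u_def by (simp add: field_simps)
    moreover have "inP v (int k + 1) (- (s*s) * (b'*b' - u))" using b'(2) inP_multu2[of "- (s*s)"] ss by simp
    ultimately have "inP v (int k + 1) (a*a - s*s*(b'*b') + 1)" by simp
    then show ?thesis using norm_from_ab[OF ab(1) b'(1), of "int k + 1"] kn by simp
  qed
  then show ?thesis using inP_mono[OF kn(1)] by blast
qed

end


lemma mmul_assoc: "mmul (mmul a b) c = mmul a (mmul b (c::'a::field m2))"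
  by (cases a; cases b; cases c) (simp add: algebra_simps)
lemma mmul_mI[simp]: "mmul mI a = a" "mmul a mI = (a::'a::field m2)"
  by (cases a; simp add: mI_def)+

context uset begin

lemma inP_mul_le: "inP v m a \<Longrightarrow> inP v n b \<Longrightarrow> k \<le> m + n \<Longrightarrow> inP v k (a * b)"
  using inP_mult inP_mono by blast
lemma inP_add_le: "inP v m a \<Longrightarrow> inP v n b \<Longrightarrow> k \<le> m \<Longrightarrow> k \<le> n \<Longrightarrow> inP v k (a + b)"
  using inP_add inP_mono by blast
lemma inP_diff_le: "inP v m a \<Longrightarrow> inP v n b \<Longrightarrow> k \<le> m \<Longrightarrow> k \<le> n \<Longrightarrow> inP v k (a - b)"
  using inP_diff inP_mono by blast
lemma inP_unit_inv: "a \<noteq> 0 \<Longrightarrow> v a = 0 \<Longrightarrow> inP v 0 (inverse a)"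
  by (simp add: inP_def v_inverse)
lemma inP_1[simp]: "inP v 0 1" by (simp add: inP_def)

lemma mstar_mmul: "mstar cj (mmul a b) = mmul (mstar cj b) (mstar cj a)"
  by (cases a; cases b) (simp add: algebra_simps)

lemma UG_iff: "M2 a b c e \<in> UG cj \<longleftrightarrow>
   cj a * c + cj c * a = 0 \<and> cj a * e + cj c * b = 1 \<and> cj b * c + cj e * a = 1 \<and> cj b * e + cj e * b = 0"
  by (simp add: UG_def wmat_def)

lemma UG_mmul: "a \<in> UG cj \<Longrightarrow> b \<in> UG cj \<Longrightarrow> mmul a b \<in> UG cj"
  unfolding UG_def by (simp add: mstar_mmul mmul_assoc) (metis mmul_assoc)

lemma int_mmul: "entries_in (inP v 0) a \<Longrightarrow> entries_in (inP v 0) b \<Longrightarrow> entries_in (inP v 0) (mmul a b)"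
  apply (cases a; cases b)
  apply (clarsimp)
  apply (intro conjI inP_add inP_mult0; assumption)
  done

lemma Kc_mmul: "a \<in> Kc cj v \<Longrightarrow> b \<in> Kc cj v \<Longrightarrow> mmul a b \<in> Kc cj v"
  unfolding Kc_def using UG_mmul int_mmul by blast

lemma psi_cong: "psi_ok v \<psi> \<Longrightarrow> inP v 1 (x - y) \<Longrightarrow> \<psi> x = \<psi> y"
proof -
  assume p: "psi_ok v \<psi>" and xy: "inP v 1 (x - y)"
  have "\<psi> x = \<psi> (y + (x - y))" by simp
  also have "\<dots> = \<psi> y * \<psi> (x - y)" using p unfolding psi_ok_def by blast
  also have "\<psi> (x - y) = 1" using p xy unfolding psi_ok_def by blast
  finally show ?thesis by simp
qed

end


locale mctx = uset cj v varpi s for cj :: "'a::field \<Rightarrow> 'a" and v varpi s +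
  fixes \<psi> :: "'a \<Rightarrow> complex" and \<chi> :: "'a m2 \<Rightarrow> complex" and r d :: nat and x1 x2 :: 'a
  assumes psi: "psi_ok v \<psi>"
    and chi: "is_char_on (Ttor cj) \<chi>"
    and rpos: "0 < r"
    and depth: "min_depth cj v \<chi> r"
    and theta0: "\<forall>z\<in>Zfil1 cj v. \<chi> z = 1"
    and xF1: "cj x1 = x1" and xF2: "cj x2 = x2"
    and xr: "inP v (- int r) (x1 + x2 * s)"
    and realizes: "\<forall>t\<in>Tfil cj v (int r div 2 + 1).
        \<chi> t = \<psi> (mtrace (mmul (M2 (x1 + x2 * s) 0 0 (- cj (x1 + x2 * s))) (msub t mI)))"
    and dbig: "2 * r < d"
begin

definition "n1 = (int d + 1) div 2"
definition "n2 = (int d + 2) div 2"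
definition "\<gamma> = x1 * varpi ^ d * s"
definition "nX = inverse (varpi ^ d) * s"
definition "qY = inverse (varpi ^ d * s)"

lemma lev: "n1 + n2 = int d + 1" "n1 \<ge> int r + 1" "n2 \<ge> n1" "2 * (int d - int r) \<ge> n2"
  "int d - int r \<ge> n1" "int d - 2 * int r \<ge> 1" "n1 \<ge> 1" "int r \<ge> 1"
proof -
  have A: "2 * int r < int d" "0 < int r" using dbig rpos by linarith+
  show "n1 + n2 = int d + 1" unfolding n1_def n2_def by presburger
  show "n1 \<ge> int r + 1" unfolding n1_def using A by presburger
  show "n2 \<ge> n1" unfolding n1_def n2_def by presburger
  show "2 * (int d - int r) \<ge> n2" unfolding n2_def using A by presburger
  show "int d - int r \<ge> n1" unfolding n1_def using A by presburger
  show "int d - 2 * int r \<ge> 1" using A by presburger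
  show "n1 \<ge> 1" unfolding n1_def using A by presburger
  show "int r \<ge> 1" using A by presburger
qed

lemma psi0: "\<psi> 0 = 1"
proof -
  have "\<psi> 0 = \<psi> 0 * \<psi> 0" using psi unfolding psi_ok_def by (metis add_0)
  moreover have "\<psi> 0 \<noteq> 0" using psi unfolding psi_ok_def by (metis norm_zero zero_neq_one)
  ultimately show ?thesis by (metis mult_cancel_right1)
qed

lemma psi_small: "inP v 1 a \<Longrightarrow> \<psi> a = 1"
  using psi unfolding psi_ok_def by blast

lemma x1r: "inP v (- int r) x1" and x2r: "inP v (- int r) (x2 * s)"
proof -
  have c: "inP v (- int r) (x1 - x2 * s)" using xr inP_cj[of "- int r" "x1 + x2 * s"] xF1 xF2 by simp
  have "x1 = ((x1 + x2 * s) + (x1 - x2 * s)) / 2" by (simp add: field_simps)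
  then show "inP v (- int r) x1" using inP_add[OF xr c] inP_divu[of 2] by (metis two_ne v2)
  have "x2 * s = ((x1 + x2 * s) - (x1 - x2 * s)) / 2" by (simp add: field_simps)
  then show "inP v (- int r) (x2 * s)" using inP_diff[OF xr c] inP_divu[of 2] by (metis two_ne v2)
qed

lemma x1_ne: "x1 \<noteq> 0"
proof
  assume x0: "x1 = 0"
  obtain t where t: "t \<in> Sfil cj v (int r)" "\<chi> t \<noteq> 1" using depth unfolding min_depth_def by blast
  then obtain a where a: "t = M2 a 0 0 (inverse a)" "a \<noteq> 0" "cj a = a" "inP v (int r) (a - 1)"
    unfolding Sfil_def by blast
  have a1: "inP v 1 (a - 1)" using inP_mono[OF _ a(4)] lev by simp
  have au: "v a = 0" using unit_of_cong[of 1 a] a1 by simp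
  have "t \<in> Tfil cj v (int r div 2 + 1)" unfolding Tfil_def using a inP_mono[OF _ a(4), of "int r div 2 + 1"] lev
    by auto
  then have "\<chi> t = \<psi> (mtrace (mmul (M2 (x1 + x2 * s) 0 0 (- cj (x1 + x2 * s))) (msub t mI)))"
    using realizes by blast
  also have "mtrace (mmul (M2 (x1 + x2 * s) 0 0 (- cj (x1 + x2 * s))) (msub t mI)) = (x2 * s) * ((a - 1) * (a - 1)) * inverse a"
    using a x0 xF2 by (simp add: mI_def field_simps)
  also have "\<psi> \<dots> = 1"
  proof (rule psi_small)
    have "inP v (- int r + (int r + int r)) ((x2 * s) * ((a - 1) * (a - 1)))"
      by (rule inP_mult[OF x2r inP_mult[OF a(4) a(4)]])
    then have "inP v 1 ((x2 * s) * ((a - 1) * (a - 1)))" using inP_mono lev by fastforce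
    then show "inP v 1 ((x2 * s) * ((a - 1) * (a - 1)) * inverse a)"
      using inP_mult0[OF _ inP_unit_inv[OF a(2) au]] by blast
  qed
  finally show False using t(2) by simp
qed

lemma gam: "\<gamma> \<noteq> 0" "cj \<gamma> = - \<gamma>" "inP v (int d - int r) \<gamma>"
proof -
  show "\<gamma> \<noteq> 0" unfolding \<gamma>_def using x1_ne by simp
  show "cj \<gamma> = - \<gamma>" unfolding \<gamma>_def using xF1 by simp
  have "inP v (- int r + int d) (x1 * varpi ^ d)" by (rule inP_mult[OF x1r]) (simp add: inP_def v_power)
  then show "inP v (int d - int r) \<gamma>" unfolding \<gamma>_def using inP_multu[of s] by simp
qed

definition "Gm = M2 (x1 + x2 * s) 0 0 (- cj (x1 + x2 * s))"
definition "gg = M2 1 (- (1/2) * inverse \<gamma>) \<gamma> (1/2)"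
definition "Ym = mmul gg (mmul Gm (minv gg))"

lemma Ym_eq: "Ym = M2 (x2 * s) qY (\<gamma> * x1) (x2 * s)"
  unfolding Ym_def gg_def Gm_def qY_def using gam xF1 xF2 x1_ne
  by (simp add: Let_def field_simps \<gamma>_def)

end


context uset begin
lemma unit_norm1: "a * cj a = 1 \<Longrightarrow> a \<noteq> 0 \<and> v a = 0"
proof -
  assume h: "a * cj a = 1"
  then have a0: "a \<noteq> 0" by auto
  have "v (a * cj a) = v a + v a" using a0 by (simp add: v_mult)
  then show ?thesis using h a0 by simp
qed
lemma unit_normu: "a * cj a = u \<Longrightarrow> u \<noteq> 0 \<Longrightarrow> v u = 0 \<Longrightarrow> a \<noteq> 0 \<and> v a = 0"
proof -
  assume h: "a * cj a = u" "u \<noteq> 0" "v u = 0"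
  then have a0: "a \<noteq> 0" by auto
  have "v (a * cj a) = v a + v a" using a0 by (simp add: v_mult)
  then show ?thesis using h a0 by simp
qed
lemma inv_cj_div: "x * cj x = 1 \<Longrightarrow> cj w * z = 1 \<Longrightarrow> x * inverse (cj (w / x)) = z"
proof -
  assume a: "x * cj x = 1" "cj w * z = 1"
  have "inverse (cj (w / x)) = cj x / cj w" by (simp only: cj_divide inverse_divide)
  then have "x * inverse (cj (w / x)) = (x * cj x) / cj w" by simp
  also have "\<dots> = 1 / cj w" using a(1) by simp
  also have "\<dots> = z" using a(2) by (metis divide_eq_eq mult.commute mult_zero_left zero_neq_one)
  finally show ?thesis .
qed
lemma Ttor_diag: "a * cj a = 1 \<Longrightarrow> M2 a 0 0 a \<in> Ttor cj"
  unfolding Ttor_def by (rule CollectI, rule exI[of _ a]) (auto simp: inverse_unique mult.commute)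
end

context mctx begin

definition "Xm = M2 0 nX 0 0"
definition "\<theta>ext = (\<lambda>k. \<chi> (M2 (m11 k) 0 0 (m11 k)))"
definition "\<zeta> = (\<lambda>t. \<chi> (mmul (minv gg) (mmul t gg)))"

lemma nX: "nX \<noteq> 0" "inP v (- int d) nX"
  unfolding nX_def by (auto simp: inP_def v_mult v_inverse v_power)
lemma qY: "qY \<noteq> 0" "inP v (- int d) qY"
  unfolding qY_def by (auto simp: inP_def v_mult v_inverse v_power)

lemma chi_mult: "x \<in> Ttor cj \<Longrightarrow> y \<in> Ttor cj \<Longrightarrow> \<chi> (mmul x y) = \<chi> x * \<chi> y"
  using chi unfolding is_char_on_def by blast

lemma TX_X_shape:
  assumes "k \<in> TX cj v Xm"
  shows "\<exists>a b. k = M2 a b 0 a \<and> a * cj a = 1 \<and> inP v 0 a \<and> inP v 0 b \<and> cj a * b + cj b * a = 0"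
proof -
  obtain a b c e where k: "k = M2 a b c e" by (cases k)
  have K: "k \<in> Kc cj v" "mmul k Xm = mmul Xm k" using assms unfolding TX_def by auto
  from K(2) have "c * nX = 0" "a * nX = nX * e" unfolding k Xm_def by auto
  then have c: "c = 0" and ae: "a = e" using nX(1) by auto
  have U: "k \<in> UG cj" "entries_in (inP v 0) k" using K(1) unfolding Kc_def by auto
  then have "cj a * a = 1" "cj b * a + cj a * b = 0" unfolding k c ae UG_iff by auto
  then show ?thesis using U(2) unfolding k c ae by (auto simp: mult.commute add.commute)
qed

lemma TX_Y_shape:
  assumes "k \<in> TX cj v Ym"
  shows "\<exists>A B. k = M2 A B (\<gamma> * \<gamma> * B) A \<and> cj A * A + \<gamma> * \<gamma> * (cj B * B) = 1 \<and>
     cj A * B + cj B * A = 0 \<and> inP v 0 A \<and> inP v 0 B"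
proof -
  obtain a b c e where k: "k = M2 a b c e" by (cases k)
  have K: "k \<in> Kc cj v" "mmul k Ym = mmul Ym k" using assms unfolding TX_def by auto
  from K(2) have e1: "a * (x2 * s) + b * (\<gamma> * x1) = x2 * s * a + qY * c"
    and e2: "a * qY + b * (x2 * s) = x2 * s * b + qY * e" unfolding k Ym_eq by auto
  from e2 have ae: "a = e" using qY(1) by (simp add: algebra_simps)
  from e1 have "qY * c = b * (\<gamma> * x1)" by (simp add: algebra_simps)
  then have c: "c = \<gamma> * \<gamma> * b" using qY(1) x1_ne unfolding qY_def \<gamma>_def by (simp add: field_simps)
  have U: "k \<in> UG cj" "entries_in (inP v 0) k" using K(1) unfolding Kc_def by auto
  then have u1: "cj a * (\<gamma> * \<gamma> * b) + cj (\<gamma> * \<gamma> * b) * a = 0" "cj a * a + cj (\<gamma> * \<gamma> * b) * b = 1"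
    unfolding k c ae UG_iff by auto
  have "\<gamma> * \<gamma> * (cj a * b + cj b * a) = 0" using u1(1) gam(2) by (simp add: algebra_simps)
  then have "cj a * b + cj b * a = 0" using gam(1) by simp
  moreover have "cj a * a + \<gamma> * \<gamma> * (cj b * b) = 1" using u1(2) gam(2) by (simp add: algebra_simps)
  ultimately show ?thesis using U(2) unfolding k c ae by auto
qed

lemma Jd_shape:
  assumes "j \<in> Jd cj v d"
  shows "\<exists>a b c e. j = M2 a b c e \<and> j \<in> UG cj \<and> inP v n1 (a - 1) \<and> inP v n1 b \<and> inP v n2 c \<and> inP v n1 (e - 1)"
  using assms unfolding Jd_def n1_def n2_def by (cases j) auto

lemma Zfil_diag: "\<rho> * cj \<rho> = 1 \<Longrightarrow> inP v 1 (\<rho> - 1) \<Longrightarrow> \<chi> (M2 \<rho> 0 0 \<rho>) = 1"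
  using theta0 unfolding Zfil1_def by blast

lemma val2_any:
  assumes t: "t \<in> TX cj v Xm" and j: "j \<in> Jd cj v d" and h: "mmul t j = M2 h11 h12 h21 h22"
    and a0: "a0 * cj a0 = 1" "inP v n1 (a0 - h22)"
  shows "\<theta>ext t * PsiX \<psi> Xm j = \<chi> (M2 a0 0 0 a0) * \<psi> (nX * h21 / a0)"
proof -
  obtain a b where tt: "t = M2 a b 0 a" "a * cj a = 1" "inP v 0 a" "inP v 0 b"
    using TX_X_shape[OF t] by blast
  obtain a' b' c' e' where jj: "j = M2 a' b' c' e'" "inP v n1 (a' - 1)" "inP v n1 b'" "inP v n2 c'" "inP v n1 (e' - 1)"
    using Jd_shape[OF j] by blast
  from h have h21: "h21 = a * c'" and h22: "h22 = a * e'" unfolding tt jj by auto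
  have au: "a \<noteq> 0" "v a = 0" using unit_norm1[OF tt(2)] by auto
  have a0u: "a0 \<noteq> 0" "v a0 = 0" using unit_norm1[OF a0(1)] by auto
  have eq: "a - a0 = - (a * (e' - 1)) - (a0 - h22)" unfolding h22 by (simp add: algebra_simps)
  have aa0: "inP v n1 (a - a0)" unfolding eq
    by (rule inP_diff[OF _ a0(2)]) (simp add: inP_mult0'[OF tt(3) jj(5)])
  define \<rho> where "\<rho> = a / a0"
  have r1: "\<rho> * cj \<rho> = 1" unfolding \<rho>_def using tt(2) a0(1) by (simp add: field_simps)
  have "\<rho> - 1 = (a - a0) / a0" unfolding \<rho>_def using a0u by (simp add: field_simps)
  then have r2: "inP v 1 (\<rho> - 1)" using inP_mono[OF lev(7) aa0] inP_divu[OF a0u] by simp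
  have "M2 a 0 0 a = mmul (M2 a0 0 0 a0) (M2 \<rho> 0 0 \<rho>)" unfolding \<rho>_def using a0u by simp
  then have "\<chi> (M2 a 0 0 a) = \<chi> (M2 a0 0 0 a0) * \<chi> (M2 \<rho> 0 0 \<rho>)"
    using chi_mult[OF Ttor_diag[OF a0(1)] Ttor_diag[OF r1]] by simp
  then have th: "\<theta>ext t = \<chi> (M2 a0 0 0 a0)" unfolding \<theta>ext_def tt using Zfil_diag[OF r1 r2] by simp
  have ps: "PsiX \<psi> Xm j = \<psi> (nX * c')" unfolding PsiX_def Xm_def jj by (simp add: mI_def)
  have "nX * c' - nX * h21 / a0 = (nX * c') * (a0 - a) / a0" unfolding h21 using a0u
    by (simp add: field_simps)
  moreover have "inP v 1 ((nX * c') * (a0 - a))"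
  proof -
    have "inP v (- int d + n2 + n1) ((nX * c') * (a0 - a))"
      using inP_mult[OF inP_mult[OF nX(2) jj(4)] aa0[unfolded inP_neg[symmetric, of n1 "a - a0"]]] by simp
    moreover have "n2 - int d + n1 = 1" using lev(1) by linarith
    ultimately show ?thesis by simp
  qed
  ultimately have "inP v 1 (nX * c' - nX * h21 / a0)" using inP_divu[OF a0u] by simp
  then have "\<psi> (nX * c') = \<psi> (nX * h21 / a0)" by (rule psi_cong[OF psi])
  then show ?thesis using th ps by simp
qed

lemma gg2: "inP v (2 * (int d - int r)) (\<gamma> * \<gamma>)"
  using inP_mult[OF gam(3) gam(3)] by (simp add: algebra_simps)
lemma varpid: "inP v (int d) (varpi ^ d)" by (simp add: inP_def v_power)
lemma qYgg: "qY * \<gamma> * \<gamma> = x1 * x1 * varpi ^ d * s" "inP v 1 (qY * \<gamma> * \<gamma>)"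
proof -
  show e: "qY * \<gamma> * \<gamma> = x1 * x1 * varpi ^ d * s" unfolding qY_def \<gamma>_def by (simp add: field_simps power2_eq_square)
  have "inP v (- int r + - int r + int d + 0) (x1 * x1 * varpi ^ d * s)"
    by (intro inP_mult x1r varpid) (simp add: inP_def)
  then show "inP v 1 (qY * \<gamma> * \<gamma>)" unfolding e using lev(6) inP_mono by fastforce
qed
lemma gx1: "inP v 1 (\<gamma> * x1)"
  using inP_mul_le[OF gam(3) x1r, of 1] lev(6) by simp

lemma zeta_eq: "\<zeta> (M2 A B (\<gamma> * \<gamma> * B) A) = \<chi> (M2 (A + \<gamma> * B) 0 0 (A - \<gamma> * B))"
proof -
  have "mmul (minv gg) (mmul (M2 A B (\<gamma> * \<gamma> * B) A) gg) = M2 (A + \<gamma> * B) 0 0 (A - \<gamma> * B)"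
    unfolding gg_def using gam(1) by (simp add: Let_def field_simps)
  then show ?thesis unfolding \<zeta>_def by simp
qed

lemma depth_T: "t \<in> Tfil cj v (int r + 1) \<Longrightarrow> \<chi> t = 1"
  using depth unfolding min_depth_def by blast

lemma val1_any:
  assumes t: "t \<in> TX cj v Ym" and j: "j \<in> Jd cj v d" and h: "mmul t j = M2 h11 h12 h21 h22"
    and a0: "a0 * cj a0 = 1" "inP v n1 (a0 - h22)"
  shows "\<zeta> t * PsiX \<psi> Ym j = \<chi> (M2 a0 0 0 a0) * \<psi> (qY * h21 / a0)"
proof -
  obtain A B where tt: "t = M2 A B (\<gamma> * \<gamma> * B) A" "cj A * A + \<gamma> * \<gamma> * (cj B * B) = 1"
     "cj A * B + cj B * A = 0" "inP v 0 A" "inP v 0 B"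
    using TX_Y_shape[OF t] by blast
  obtain a' b' c' e' where jj: "j = M2 a' b' c' e'" "inP v n1 (a' - 1)" "inP v n1 b'" "inP v n2 c'" "inP v n1 (e' - 1)"
    using Jd_shape[OF j] by blast
  from h have h21: "h21 = \<gamma> * \<gamma> * B * a' + A * c'" and h22: "h22 = \<gamma> * \<gamma> * B * b' + A * e'"
    unfolding tt jj by (auto simp: algebra_simps)
  have a0u: "a0 \<noteq> 0" "v a0 = 0" using unit_norm1[OF a0(1)] by auto
  have b'0: "inP v 0 b'" using inP_mono[OF _ jj(3)] lev(7) by simp
  have eq: "A - a0 = - (a0 - h22) - \<gamma> * \<gamma> * B * b' - A * (e' - 1)" unfolding h22 by (simp add: algebra_simps)
  have Aa0: "inP v n1 (A - a0)" unfolding eq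
  proof (intro inP_diff)
    show "inP v n1 (- (a0 - h22))" using a0(2) by (simp only: inP_neg)
    show "inP v n1 (\<gamma> * \<gamma> * B * b')"
      using inP_mul_le[OF inP_mul_le[OF gg2 tt(5), of 0] jj(3), of n1] lev by simp
    show "inP v n1 (A * (e' - 1))" using inP_mult0'[OF tt(4) jj(5)] .
  qed
  have Au: "A \<noteq> 0" "v A = 0" using unit_of_cong[OF a0u, of A] inP_mono[OF lev(7) Aa0] by auto
  have N1: "cj (A + \<gamma> * B) * (A - \<gamma> * B) = 1"
  proof -
    have "cj (A + \<gamma> * B) * (A - \<gamma> * B) = (cj A * A + \<gamma> * \<gamma> * (cj B * B)) - \<gamma> * (cj A * B + cj B * A)"
      using gam(2) by (simp add: algebra_simps)
    then show ?thesis using tt(2,3) by simp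
  qed
  define \<rho> where "\<rho> = (A + \<gamma> * B) / a0"
  have AgB: "A + \<gamma> * B \<noteq> 0"
  proof
    assume "A + \<gamma> * B = 0"
    then have "cj (A + \<gamma> * B) = 0" by (simp only: cj_eq0)
    then show False using N1 by simp
  qed
  have rho0: "\<rho> \<noteq> 0" unfolding \<rho>_def using AgB a0u by simp
  have "\<rho> - 1 = ((A - a0) + \<gamma> * B) / a0" unfolding \<rho>_def using a0u by (simp add: field_simps)
  moreover have "inP v (int r + 1) ((A - a0) + \<gamma> * B)"
  proof (rule inP_add_le[OF Aa0 inP_mul_le[OF gam(3) tt(5), of "int d - int r"]])
  qed (use lev in auto)
  ultimately have rho1: "inP v (int r + 1) (\<rho> - 1)" using inP_divu[OF a0u] by simp
  have rT: "M2 \<rho> 0 0 (inverse (cj \<rho>)) \<in> Tfil cj v (int r + 1)" unfolding Tfil_def using rho0 rho1 by blast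
  have rT': "M2 \<rho> 0 0 (inverse (cj \<rho>)) \<in> Ttor cj" unfolding Ttor_def using rho0 by blast
  have dec: "M2 (A + \<gamma> * B) 0 0 (A - \<gamma> * B) = mmul (M2 a0 0 0 a0) (M2 \<rho> 0 0 (inverse (cj \<rho>)))"
  proof -
    have "a0 * inverse (cj \<rho>) = A - \<gamma> * B" unfolding \<rho>_def by (rule inv_cj_div[OF a0(1) N1])
    then show ?thesis unfolding \<rho>_def using a0u by simp
  qed
  have ze: "\<zeta> t = \<chi> (M2 a0 0 0 a0)"
    unfolding tt zeta_eq dec chi_mult[OF Ttor_diag[OF a0(1)] rT'] depth_T[OF rT] by simp
  have ps: "PsiX \<psi> Ym j = \<psi> (x2 * s * (a' - 1) + qY * c' + \<gamma> * x1 * b' + x2 * s * (e' - 1))"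
    unfolding PsiX_def Ym_eq jj by (simp add: mI_def algebra_simps)
  have p1: "\<psi> (x2 * s * (a' - 1) + qY * c' + \<gamma> * x1 * b' + x2 * s * (e' - 1)) = \<psi> (qY * c')"
  proof (rule psi_cong[OF psi])
    have "inP v 1 (x2 * s * (a' - 1) + \<gamma> * x1 * b' + x2 * s * (e' - 1))"
    proof (intro inP_add)
      show "inP v 1 (x2 * s * (a' - 1))" using inP_mul_le[OF x2r jj(2), of 1] lev by simp
      show "inP v 1 (\<gamma> * x1 * b')" using inP_mul_le[OF gx1 b'0, of 1] by simp
      show "inP v 1 (x2 * s * (e' - 1))" using inP_mul_le[OF x2r jj(5), of 1] lev by simp
    qed
    then show "inP v 1 (x2 * s * (a' - 1) + qY * c' + \<gamma> * x1 * b' + x2 * s * (e' - 1) - qY * c')"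
      by (simp add: algebra_simps)
  qed
  have p2: "\<psi> (qY * c') = \<psi> (qY * h21 / a0)"
  proof (rule psi_cong[OF psi])
    have eq2: "qY * c' - qY * h21 / a0 = (qY * c' * (a0 - A) - (qY * \<gamma> * \<gamma>) * (B * a')) / a0"
      unfolding h21 using a0u by (simp add: field_simps)
    have "inP v 1 (qY * c' * (a0 - A) - (qY * \<gamma> * \<gamma>) * (B * a'))"
    proof (rule inP_diff)
      have "inP v n1 (a0 - A)" using Aa0 by (metis inP_neg minus_diff_eq)
      then show "inP v 1 (qY * c' * (a0 - A))"
        using inP_mul_le[OF inP_mul_le[OF qY(2) jj(4), of "n2 - int d"], of n1 "a0 - A" 1] lev(1) by simp
      have a'0: "inP v 0 a'"
      proof -
        have "a' = (a' - 1) + 1" by simp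
        then show ?thesis using inP_add_le[OF jj(2) inP_1, of 0] lev(7) by simp
      qed
      show "inP v 1 ((qY * \<gamma> * \<gamma>) * (B * a'))"
        using inP_mul_le[OF qYgg(2) inP_mult0[OF tt(5) a'0], of 1] by simp
    qed
    then show "inP v 1 (qY * c' - qY * h21 / a0)" unfolding eq2 using inP_divu[OF a0u] by simp
  qed
  show ?thesis using ze ps p1 p2 by simp
qed

end


context mctx begin

lemma inP0_of: "inP v m a \<Longrightarrow> m \<ge> 0 \<Longrightarrow> inP v 0 a" using inP_mono by blast
lemma inP0_of1: "inP v m (a - 1) \<Longrightarrow> m \<ge> 0 \<Longrightarrow> inP v 0 a"
proof -
  assume "inP v m (a - 1)" "m \<ge> 0"
  then have "inP v 0 ((a - 1) + 1)" using inP_add[OF inP_mono[of 0 m] inP_1] by blast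
  then show ?thesis by simp
qed

lemma TX_Kc: "TX cj v X \<subseteq> Kc cj v" unfolding TX_def by auto
lemma Jd_Kc: "Jd cj v d \<subseteq> Kc cj v"
proof
  fix j assume j: "j \<in> Jd cj v d"
  obtain a b c e where jj: "j = M2 a b c e" "j \<in> UG cj" "inP v n1 (a - 1)" "inP v n1 b" "inP v n2 c" "inP v n1 (e - 1)"
    using Jd_shape[OF j] by blast
  have "entries_in (inP v 0) j" unfolding jj(1) using jj lev
    by (auto intro: inP0_of inP0_of1)
  then show "j \<in> Kc cj v" unfolding Kc_def using jj(2) by blast
qed
lemma setprod_Kc: "setprod (TX cj v X) (Jd cj v d) \<subseteq> Kc cj v"
  unfolding setprod_def using TX_Kc Jd_Kc Kc_mmul by blast

lemma cayley:
  assumes h: "M2 A B C E \<in> Kc cj v" and hc: "inP v n2 C" "inP v n1 (A - E)"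
  shows "\<exists>a0. a0 * cj a0 = 1 \<and> inP v n1 (a0 - E)"
proof -
  have U: "cj A * E + cj C * B = 1" and I: "inP v 0 A" "inP v 0 B" "inP v 0 C" "inP v 0 E"
    using h by (auto simp: Kc_def UG_iff)
  have eq: "E * cj E - 1 = cj (E - A) * E - cj C * B" using U by (simp add: algebra_simps)
  have m1: "inP v n1 (E * cj E - 1)" unfolding eq
  proof (rule inP_diff)
    have "inP v n1 (E - A)" using hc(2) by (metis inP_neg minus_diff_eq)
    then show "inP v n1 (cj (E - A) * E)" using inP_mult0[OF _ I(4)] by (simp only: inP_cj)
    show "inP v n1 (cj C * B)" using inP_mul_le[of n2 "cj C" 0 B n1] hc(1) I(2) lev(3) by simp
  qed
  show ?thesis
  proof (cases "inP v 1 (E + 1)")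
    case False
    then have u: "E + 1 \<noteq> 0" "v (E + 1) = 0" using inP_int_iff inP_add[OF I(4) inP_1] by auto
    have u': "cj E + 1 \<noteq> 0" "v (cj E + 1) = 0" using u by (metis cj_1 cj_add cj_eq0 v_cj)+
    define a0 where "a0 = (E + 1) / (cj E + 1)"
    have "cj a0 = (cj E + 1) / (E + 1)" unfolding a0_def by simp
    then have n: "a0 * cj a0 = 1" unfolding a0_def using u(1) u'(1) by simp
    have e: "a0 - E = - (E * cj E - 1) / (cj E + 1)" unfolding a0_def using u'
      by (simp add: field_simps)
    have "inP v n1 (- (E * cj E - 1))" using m1 by (simp only: inP_neg)
    then have "inP v n1 (a0 - E)" unfolding e using inP_divu[OF u'] by simp
    then show ?thesis using n by blast
  next
    case True
    have "E - 1 = (E + 1) - 2" by simp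
    then have u: "E - 1 \<noteq> 0" "v (E - 1) = 0"
      using unit_of_cong[of "-2" "E - 1"] True by (simp_all add: algebra_simps)
    have u': "1 - cj E \<noteq> 0" "v (1 - cj E) = 0" using u
      by (metis cj_1 cj_diff cj_eq0 minus_diff_eq neg_equal_0_iff_equal v_cj v_neg)+
    define a0 where "a0 = (E - 1) / (1 - cj E)"
    have "cj a0 = (cj E - 1) / (1 - E)" unfolding a0_def by simp
    moreover have "1 - E \<noteq> 0" using u(1) by auto
    moreover have "(E - 1) / (1 - cj E) * ((cj E - 1) / (1 - E)) = 1"
    proof -
      have "(E - 1) * (cj E - 1) = (1 - cj E) * (1 - E)" by (simp add: algebra_simps)
      moreover have "(1 - cj E) * (1 - E) \<noteq> 0" using u(1) u'(1) by auto
      ultimately show ?thesis by (simp add: divide_simps)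
    qed
    ultimately have "a0 * cj a0 = 1" unfolding a0_def by simp
    moreover have "a0 - E = (E * cj E - 1) / (1 - cj E)" unfolding a0_def using u'
      by (simp add: field_simps)
    then have "inP v n1 (a0 - E)" using m1 inP_divu[OF u'] by simp
    ultimately show ?thesis by blast
  qed
qed

lemma a'0: "inP v n1 (a' - 1) \<Longrightarrow> inP v 0 a'" using inP0_of1 lev(7) by simp

lemma H2_S:
  assumes h: "h \<in> setprod (TX cj v Xm) (Jd cj v d)" and hh: "h = M2 h11 h12 h21 h22"
  shows "inP v n2 h21 \<and> inP v n1 (h11 - h22) \<and> (\<exists>a0. a0 * cj a0 = 1 \<and> inP v n1 (a0 - h22))"
proof -
  obtain t j where tj: "t \<in> TX cj v Xm" "j \<in> Jd cj v d" "h = mmul t j" using h unfolding setprod_def by blast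
  obtain a b where tt: "t = M2 a b 0 a" "a * cj a = 1" "inP v 0 a" "inP v 0 b"
    using TX_X_shape[OF tj(1)] by blast
  obtain a' b' c' e' where jj: "j = M2 a' b' c' e'" "inP v n1 (a' - 1)" "inP v n1 b'" "inP v n2 c'" "inP v n1 (e' - 1)"
    using Jd_shape[OF tj(2)] by blast
  from tj(3) hh have e: "h11 = a * a' + b * c'" "h21 = a * c'" "h22 = a * e'" unfolding tt jj by auto
  have "inP v n2 h21" unfolding e using inP_mult0'[OF tt(3) jj(4)] .
  moreover have "inP v n1 (h11 - h22)"
  proof -
    have "h11 - h22 = a * (a' - 1) + b * c' - a * (e' - 1)" unfolding e by (simp add: algebra_simps)
    moreover have "inP v n1 (a * (a' - 1) + b * c' - a * (e' - 1))"
      by (intro inP_diff inP_add inP_mult0'[OF tt(3) jj(2)] inP_mult0'[OF tt(3) jj(5)]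
          inP_mul_le[OF tt(4) jj(4)]) (use lev in simp)
    ultimately show ?thesis by simp
  qed
  moreover have "inP v n1 (a - h22)"
  proof -
    have "a - h22 = - (a * (e' - 1))" unfolding e by (simp add: algebra_simps)
    then show ?thesis using inP_mult0'[OF tt(3) jj(5)] by simp
  qed
  ultimately show ?thesis using tt(2) by blast
qed

lemma H1_S:
  assumes h: "h \<in> setprod (TX cj v Ym) (Jd cj v d)" and hh: "h = M2 h11 h12 h21 h22"
  shows "inP v n2 h21 \<and> inP v n1 (h11 - h22)"
proof -
  obtain t j where tj: "t \<in> TX cj v Ym" "j \<in> Jd cj v d" "h = mmul t j" using h unfolding setprod_def by blast
  obtain A B where tt: "t = M2 A B (\<gamma> * \<gamma> * B) A" "inP v 0 A" "inP v 0 B"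
    using TX_Y_shape[OF tj(1)] by blast
  obtain a' b' c' e' where jj: "j = M2 a' b' c' e'" "inP v n1 (a' - 1)" "inP v n1 b'" "inP v n2 c'" "inP v n1 (e' - 1)"
    using Jd_shape[OF tj(2)] by blast
  from tj(3) hh have e: "h11 = A * a' + B * c'" "h21 = \<gamma> * \<gamma> * B * a' + A * c'" "h22 = \<gamma> * \<gamma> * B * b' + A * e'"
    unfolding tt jj by (auto simp: algebra_simps)
  have gB: "inP v (2 * (int d - int r)) (\<gamma> * \<gamma> * B)" using inP_mult0[OF gg2 tt(3)] .
  have "inP v n2 h21" unfolding e
    by (intro inP_add inP_mult0'[OF tt(2) jj(4)] inP_mul_le[OF gB a'0[OF jj(2)]]) (use lev in simp)
  moreover have "inP v n1 (h11 - h22)"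
  proof -
    have "h11 - h22 = A * (a' - 1) + B * c' - \<gamma> * \<gamma> * B * b' - A * (e' - 1)" unfolding e by (simp add: algebra_simps)
    moreover have "inP v n1 (A * (a' - 1) + B * c' - \<gamma> * \<gamma> * B * b' - A * (e' - 1))"
      by (intro inP_diff inP_add inP_mult0'[OF tt(2) jj(2)] inP_mult0'[OF tt(2) jj(5)]
          inP_mul_le[OF tt(3) jj(4)] inP_mul_le[OF gB jj(3)]) (use lev in simp)+
    ultimately show ?thesis by simp
  qed
  ultimately show ?thesis by blast
qed

lemma cj_norm1: "a * cj a = 1 \<Longrightarrow> cj a = inverse a"
  by (metis inverse_unique)

lemma Jd_intro: "M2 a b c e \<in> UG cj \<Longrightarrow> inP v n1 (a - 1) \<Longrightarrow> inP v n1 b \<Longrightarrow> inP v n2 c \<Longrightarrow> inP v n1 (e - 1)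
   \<Longrightarrow> M2 a b c e \<in> Jd cj v d"
  unfolding Jd_def n1_def n2_def by simp

lemma decomp_X:
  assumes h: "M2 A B C E \<in> Kc cj v" and hc: "inP v n2 C" "inP v n1 (A - E)"
    and a0: "a0 * cj a0 = 1" "inP v n1 (a0 - E)"
  shows "M2 A B C E \<in> setprod (TX cj v Xm) (Jd cj v d)"
proof -
  have U: "cj B * E + cj E * B = 0" and I: "inP v 0 A" "inP v 0 B" "inP v 0 C" "inP v 0 E"
    and UG: "M2 A B C E \<in> UG cj"
    using h by (auto simp: Kc_def UG_iff)
  have a0u: "a0 \<noteq> 0" "v a0 = 0" using unit_norm1[OF a0(1)] by auto
  have ca0: "cj a0 = inverse a0" using cj_norm1[OF a0(1)] .
  have Eu: "E \<noteq> 0" "v E = 0" using unit_of_cong[OF a0u, of E] inP_mono[OF lev(7) a0(2)]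
    by (metis inP_neg minus_diff_eq)+
  have cEu: "cj E \<noteq> 0" using Eu by simp
  define b where "b = a0 * B / E"
  define t where "t = M2 a0 b 0 a0"
  define ti where "ti = M2 (inverse a0) (- b / (a0 * a0)) 0 (inverse a0)"
  define j where "j = mmul ti (M2 A B C E)"
  have bB: "cj b * a0 + cj a0 * b = 0"
  proof -
    have "cj b * a0 + cj a0 * b = (cj B * E + cj E * B) / (E * cj E)"
      unfolding b_def using a0u Eu cEu ca0 by (simp add: field_simps)
    then show ?thesis using U by simp
  qed
  have b0: "inP v 0 b" unfolding b_def
    using inP_divu[OF Eu] inP_mult[OF unit_inP0[OF a0u(2)] I(2)] by simp
  have tU: "t \<in> UG cj" unfolding t_def UG_iff using a0(1) bB by (simp add: mult.commute)
  have tK: "t \<in> Kc cj v" unfolding Kc_def using tU b0 unit_inP0[OF a0u(2)] by (simp add: t_def)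
  have tT: "t \<in> TX cj v Xm" unfolding TX_def using tK by (simp add: t_def Xm_def mult.commute)
  have tiU: "ti \<in> UG cj" unfolding ti_def UG_iff
  proof (intro conjI)
    show "cj (inverse a0) * 0 + cj 0 * inverse a0 = 0" by simp
    show "cj (inverse a0) * inverse a0 + cj 0 * (- b / (a0 * a0)) = 1" using ca0 a0u by simp
    show "cj (- b / (a0 * a0)) * 0 + cj (inverse a0) * inverse a0 = 1" using ca0 a0u by simp
    show "cj (- b / (a0 * a0)) * inverse a0 + cj (inverse a0) * (- b / (a0 * a0)) = 0"
    proof -
      have "cj (- b / (a0 * a0)) * inverse a0 + cj (inverse a0) * (- b / (a0 * a0))
          = - (cj b * a0 + cj a0 * b)"
        unfolding cj_divide cj_neg cj_mult cj_inverse ca0 using a0u by (simp add: field_simps)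
      then show ?thesis using bB by simp
    qed
  qed
  have jU: "j \<in> UG cj" unfolding j_def by (rule UG_mmul[OF tiU UG])
  have je: "j = M2 (A / a0 - b * C / (a0 * a0)) 0 (C / a0) (E / a0)"
    unfolding j_def ti_def b_def using a0u Eu by (simp add: field_simps)
  have Aa0: "inP v n1 (A - a0)"
  proof -
    have "A - a0 = (A - E) - (a0 - E)" by simp
    then show ?thesis using inP_diff[OF hc(2) a0(2)] by simp
  qed
  have jJ: "j \<in> Jd cj v d" unfolding je
  proof (rule Jd_intro)
    show "M2 (A / a0 - b * C / (a0 * a0)) 0 (C / a0) (E / a0) \<in> UG cj" using jU je by simp
    have "A / a0 - b * C / (a0 * a0) - 1 = ((A - a0) - b * C / a0) / a0" using a0u by (simp add: field_simps)
    moreover have "inP v n1 ((A - a0) - b * C / a0)"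
      by (intro inP_diff Aa0) (use inP_divu[OF a0u] inP_mul_le[OF b0 hc(1), of n1] lev in simp)
    ultimately show "inP v n1 (A / a0 - b * C / (a0 * a0) - 1)" using inP_divu[OF a0u] by simp
    show "inP v n1 0" by simp
    show "inP v n2 (C / a0)" using inP_divu[OF a0u] hc(1) by simp
    have "E / a0 - 1 = - (a0 - E) / a0" using a0u by (simp add: field_simps)
    moreover have "inP v n1 (- (a0 - E))" using a0(2) by (simp only: inP_neg)
    ultimately show "inP v n1 (E / a0 - 1)" using inP_divu[OF a0u] by simp
  qed
  have "mmul t ti = mI" unfolding t_def ti_def mI_def using a0u by (simp add: field_simps)
  then have "mmul t j = M2 A B C E" unfolding j_def by (simp add: mmul_assoc[symmetric])
  then show ?thesis unfolding setprod_def using tT jJ by (metis (mono_tags, lifting) mem_Collect_eq)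
qed

lemma eight_ne[simp]: "(8::'a) \<noteq> 0"
proof -
  have "(8::'a) = 2 * 4" by simp
  then show ?thesis by (metis four_ne two_ne mult_eq_0_iff)
qed
lemma sixteen_ne[simp]: "(16::'a) \<noteq> 0"
proof -
  have "(16::'a) = 4 * 4" by simp
  then show ?thesis by (metis four_ne mult_eq_0_iff)
qed
lemma n32_ne[simp]: "(32::'a) \<noteq> 0"
proof -
  have "(32::'a) = 2 * 16" by simp
  then show ?thesis by (metis sixteen_ne two_ne mult_eq_0_iff)
qed
lemma n64_ne[simp]: "(64::'a) \<noteq> 0"
proof -
  have "(64::'a) = 4 * 16" by simp
  then show ?thesis by (metis sixteen_ne four_ne mult_eq_0_iff)
qed

definition "tY a u = M2 (a * (u + inverse u) / 2) (a * (u - inverse u) / (2 * \<gamma>))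
   (\<gamma> * \<gamma> * (a * (u - inverse u) / (2 * \<gamma>))) (a * (u + inverse u) / 2)"

lemma wq: "\<gamma> * x1 = qY * \<gamma> * \<gamma>" using qYgg(1) unfolding \<gamma>_def by (simp add: algebra_simps)

lemma tY_UG: assumes "a * cj a = 1" "cj u = u" "u \<noteq> 0" shows "tY a u \<in> UG cj"
proof -
  have ca: "cj a = inverse a" using cj_norm1[OF assms(1)] .
  have a0: "a \<noteq> 0" using assms(1) by auto
  show ?thesis unfolding tY_def UG_iff
    unfolding cj_divide cj_neg cj_mult cj_inverse cj_add cj_diff ca assms(2) gam(2) cj_2
    using a0 assms(3) gam(1) by (simp add: field_simps) (simp add: algebra_simps power2_eq_square)?
qed

lemma x1q: "x1 = qY * \<gamma>" using wq gam(1) by (simp add: mult.assoc)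
lemma comm_gen: "mmul (M2 P Q (g * Q) P) (M2 p q (q * g) p) = mmul (M2 p q (q * g) p) (M2 P Q (g * Q) P)"
  by (simp add: algebra_simps)
lemma tY_comm: "mmul (tY a u) Ym = mmul Ym (tY a u)"
proof -
  have "Ym = M2 (x2 * s) qY (qY * (\<gamma> * \<gamma>)) (x2 * s)" unfolding Ym_eq using wq by (simp add: mult.assoc)
  then show ?thesis unfolding tY_def using comm_gen by metis
qed

lemma tY_inv_gen:
  fixes a ia u iu g ig h :: "'b::field"
  assumes "a * ia = 1" "u * iu = 1" "g * ig = 1" "2 * h = 1"
  shows "mmul (M2 (a * (u + iu) * h) (a * (u - iu) * h * ig) (g * g * (a * (u - iu) * h * ig)) (a * (u + iu) * h))
              (M2 (ia * (iu + u) * h) (ia * (iu - u) * h * ig) (g * g * (ia * (iu - u) * h * ig)) (ia * (iu + u) * h))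
         = M2 1 0 0 1"
  using assms by simp algebra

lemma tY_inv: assumes "a \<noteq> 0" "u \<noteq> 0" shows "mmul (tY a u) (tY (inverse a) (inverse u)) = mI"
proof -
  have e: "x / 2 = x * inverse 2" "x / (2 * \<gamma>) = x * inverse 2 * inverse \<gamma>" for x :: 'a
    using gam(1) by (simp_all add: field_simps)
  show ?thesis unfolding tY_def mI_def e inverse_inverse_eq
    by (rule tY_inv_gen) (use assms gam(1) in auto)
qed


end


lemma upoly:
  fixes k u iu :: "'b::field"
  assumes "u = 1 + k" "u * iu = 1"
  shows "u - iu = k * (2 + k) * iu" "iu + u = 2 + k * k * iu" "2 + k * k * iu - (2 + k) * iu = k"
  using assms by algebra+

context mctx begin

lemma decomp_Y:
  assumes h: "M2 A B C E \<in> Kc cj v" and hc: "inP v n2 C" "inP v n1 (A - E)"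
    and a0: "a0 * cj a0 = 1" "inP v n1 (a0 - E)"
  shows "M2 A B C E \<in> setprod (TX cj v Ym) (Jd cj v d)"
proof -
  have U: "cj B * E + cj E * B = 0" and I: "inP v 0 A" "inP v 0 B" "inP v 0 C" "inP v 0 E"
    and UG: "M2 A B C E \<in> UG cj"
    using h by (auto simp: Kc_def UG_iff)
  have a0u: "a0 \<noteq> 0" "v a0 = 0" using unit_norm1[OF a0(1)] by auto
  have ca0: "cj a0 = inverse a0" using cj_norm1[OF a0(1)] .
  have Eu: "E \<noteq> 0" "v E = 0" using unit_of_cong[OF a0u, of E] inP_mono[OF lev(7) a0(2)]
    by (metis inP_neg minus_diff_eq)+
  have cEu: "cj E \<noteq> 0" using Eu by simp
  define \<kappa> where "\<kappa> = \<gamma> * B / E"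
  define u where "u = 1 + \<kappa>"
  have cBE: "cj B / cj E = - (B / E)"
  proof -
    have "cj B * E = - (cj E * B)" using U by (simp add: add_eq_0_iff)
    then show ?thesis using Eu cEu by (simp add: field_simps)
  qed
  have cjk: "cj \<kappa> = \<kappa>"
  proof -
    have "cj \<kappa> = cj \<gamma> * (cj B / cj E)" unfolding \<kappa>_def by (simp only: cj_divide cj_mult times_divide_eq_right)
    also have "\<dots> = \<kappa>" unfolding cBE gam(2) \<kappa>_def by simp
    finally show ?thesis .
  qed
  have BE0: "inP v 0 (B / E)" using inP_divu[OF Eu] I(2) by simp
  have kl: "inP v (int d - int r) \<kappa>" unfolding \<kappa>_def using inP_mult0[OF gam(3) BE0] by (simp add: mult.assoc)
  have k1: "inP v n1 \<kappa>" "inP v 1 \<kappa>" "inP v 0 \<kappa>" using inP_mono[OF _ kl] lev by auto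
  have uu: "u \<noteq> 0" "v u = 0" using unit_of_cong[of 1 u] k1(2) unfolding u_def by simp_all
  have cju: "cj u = u" unfolding u_def using cjk by simp
  have iu0: "inP v 0 (inverse u)" by (rule inP_unit_inv[OF uu])
  have ia0: "inP v 0 (inverse a0)" by (rule inP_unit_inv[OF a0u])
  have a00: "inP v 0 a0" using unit_inP0[OF a0u(2)] .
  have u0: "inP v 0 u" using unit_inP0[OF uu(2)] .
  have gg0: "inP v 0 (\<gamma> * \<gamma>)" using inP_mono[OF _ gg2] lev by simp
  define t where "t = tY a0 u"
  have Bt: "a0 * (u - inverse u) / (2 * \<gamma>) = a0 * (B / E) * (2 + \<kappa>) * inverse u / 2"
  proof -
    have "a0 * (u - inverse u) / (2 * \<gamma>) = a0 * (\<kappa> * (2 + \<kappa>) * inverse u) / (2 * \<gamma>)"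
      using upoly(1)[OF u_def] uu(1) by simp
    also have "\<dots> = a0 * (\<kappa> / \<gamma>) * (2 + \<kappa>) * inverse u / 2" using gam(1) by (simp add: field_simps)
    also have "\<kappa> / \<gamma> = B / E" unfolding \<kappa>_def using gam(1) by simp
    finally show ?thesis .
  qed
  have Bt0: "inP v 0 (a0 * (B / E) * (2 + \<kappa>) * inverse u / 2)"
  proof -
    have i2: "inP v 0 (2 + \<kappa>)" by (rule inP_add[OF _ k1(3)]) (simp add: inP_def)
    have "inP v 0 (a0 * (B / E) * (2 + \<kappa>) * inverse u)"
      by (rule inP_mult0[OF inP_mult0[OF inP_mult0[OF a00 BE0] i2] iu0])
    then show ?thesis using inP_divu[of 2 0 "a0 * (B / E) * (2 + \<kappa>) * inverse u"] by simp
  qed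
  have tK: "t \<in> Kc cj v" unfolding Kc_def
  proof (intro CollectI conjI)
    show "t \<in> UG cj" unfolding t_def by (rule tY_UG[OF a0(1) cju uu(1)])
    have At0: "inP v 0 (a0 * (u + inverse u) / 2)"
      using inP_divu[of 2 0] inP_mult0[OF a00 inP_add[OF u0 iu0]] by simp
    show "entries_in (inP v 0) t" unfolding t_def tY_def Bt using At0 Bt0 inP_mult0[OF gg0 Bt0] by simp
  qed
  have tT: "t \<in> TX cj v Ym" unfolding TX_def using tK tY_comm t_def by blast
  define Ai where "Ai = inverse a0 + inverse a0 * (\<kappa> * \<kappa>) * inverse u / 2"
  define Bi where "Bi = - (inverse a0 * (B / E) * (2 + \<kappa>) * inverse u / 2)"
  have ti: "tY (inverse a0) (inverse u) = M2 Ai Bi (\<gamma> * \<gamma> * Bi) Ai"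
  proof -
    have iuu: "u * inverse u = 1" using uu(1) by simp
    have P: "inverse a0 * (inverse u + inverse (inverse u)) / 2 = Ai"
      unfolding inverse_inverse_eq upoly(2)[OF u_def iuu] Ai_def using a0u(1) uu(1) by (simp add: field_simps)
    have iu: "inverse u - u = - (\<kappa> * (2 + \<kappa>) * inverse u)" using upoly(1)[OF u_def iuu] by (metis minus_diff_eq)
    have "inverse a0 * (inverse u - inverse (inverse u)) / (2 * \<gamma>) = inverse a0 * (- (\<kappa> * (2 + \<kappa>) * inverse u)) / (2 * \<gamma>)"
      by (simp only: inverse_inverse_eq iu)
    also have "\<dots> = - (inverse a0 * (\<kappa> / \<gamma>) * (2 + \<kappa>) * inverse u / 2)"
      using gam(1) by (simp add: field_simps)
    also have "\<kappa> / \<gamma> = B / E" unfolding \<kappa>_def using gam(1) by simp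
    finally have Q: "inverse a0 * (inverse u - inverse (inverse u)) / (2 * \<gamma>) = Bi" unfolding Bi_def .
    show ?thesis unfolding tY_def P Q by simp
  qed
  define j where "j = mmul (tY (inverse a0) (inverse u)) (M2 A B C E)"
  have jU: "j \<in> UG cj" unfolding j_def
  proof (rule UG_mmul[OF tY_UG UG])
    show "inverse a0 * cj (inverse a0) = 1" using ca0 a0u by simp
    show "cj (inverse u) = inverse u" using cju by simp
    show "inverse u \<noteq> 0" using uu by simp
  qed
  have je: "j = M2 (Ai * A + Bi * C) (Ai * B + Bi * E) (\<gamma> * \<gamma> * Bi * A + Ai * C) (\<gamma> * \<gamma> * Bi * B + Ai * E)"
    unfolding j_def ti by simp
  have Bi0: "inP v 0 Bi"
  proof -
    have i2: "inP v 0 (2 + \<kappa>)" by (rule inP_add[OF _ k1(3)]) (simp add: inP_def)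
    have "inP v 0 (inverse a0 * (B / E) * (2 + \<kappa>) * inverse u)"
      by (rule inP_mult0[OF inP_mult0[OF inP_mult0[OF ia0 BE0] i2] iu0])
    then show ?thesis unfolding Bi_def inP_neg using inP_divu[of 2 0 "inverse a0 * (B / E) * (2 + \<kappa>) * inverse u"] by simp
  qed
  have Ai0: "inP v 0 Ai" unfolding Ai_def
    by (intro inP_add ia0) (use inP_divu[of 2 0] inP_mult0[OF inP_mult0[OF ia0 inP_mult0[OF k1(3) k1(3)]] iu0] in simp)
  have Aid: "inP v n1 (Ai - inverse a0)"
  proof -
    have e: "Ai - inverse a0 = inverse a0 * (\<kappa> * \<kappa>) * inverse u / 2" unfolding Ai_def by simp
    have "inP v n1 (\<kappa> * \<kappa>)" using inP_mul_le[OF k1(1) k1(3), of n1] by simp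
    then have "inP v n1 (inverse a0 * (\<kappa> * \<kappa>) * inverse u)" using inP_mult0'[OF ia0] inP_mult0[OF _ iu0] by blast
    then show ?thesis unfolding e using inP_divu[of 2 n1 "inverse a0 * (\<kappa> * \<kappa>) * inverse u"] by simp
  qed
  have Aa0: "inP v n1 (A - a0)"
  proof -
    have "A - a0 = (A - E) - (a0 - E)" by simp
    then show ?thesis using inP_diff[OF hc(2) a0(2)] by simp
  qed
  have Ea0: "inP v n1 (E - a0)" using a0(2) by (metis inP_neg minus_diff_eq)
  have jJ: "j \<in> Jd cj v d" unfolding je
  proof (rule Jd_intro)
    show "M2 (Ai * A + Bi * C) (Ai * B + Bi * E) (\<gamma> * \<gamma> * Bi * A + Ai * C) (\<gamma> * \<gamma> * Bi * B + Ai * E) \<in> UG cj"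
      using jU je by simp
    have "Ai * A + Bi * C - 1 = (Ai - inverse a0) * A + inverse a0 * (A - a0) + Bi * C"
      using a0u by (simp add: field_simps)
    moreover have "inP v n1 ((Ai - inverse a0) * A + inverse a0 * (A - a0) + Bi * C)"
      by (intro inP_add inP_mult0[OF Aid I(1)] inP_mult0'[OF ia0 Aa0]) (use inP_mul_le[OF Bi0 hc(1), of n1] lev in simp)
    ultimately show "inP v n1 (Ai * A + Bi * C - 1)" by (simp only:)
    have "Ai * B + Bi * E = B * \<kappa> / (2 * a0)"
    proof -
      have iuu: "u * inverse u = 1" using uu(1) by simp
      have "Ai * B + Bi * E = inverse a0 * B * (2 + \<kappa> * \<kappa> * inverse u - (2 + \<kappa>) * inverse u) / 2"
        unfolding Ai_def Bi_def using Eu a0u(1) uu(1) by (simp add: field_simps)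
      also have "\<dots> = B * \<kappa> / (2 * a0)" unfolding upoly(3)[OF u_def iuu] using a0u by (simp add: field_simps)
      finally show ?thesis .
    qed
    moreover have "inP v n1 (B * \<kappa> / (2 * a0))"
      using inP_divu[of "2 * a0"] inP_mult0'[OF I(2) k1(1)] a0u by (simp add: v_mult)
    ultimately show "inP v n1 (Ai * B + Bi * E)" by (simp only:)
    show "inP v n2 (\<gamma> * \<gamma> * Bi * A + Ai * C)"
      by (intro inP_add inP_mult0'[OF Ai0 hc(1)] inP_mult0[OF inP_mult0[OF inP_mono[OF _ gg2] Bi0] I(1)]) (use lev in simp)
    have "\<gamma> * \<gamma> * Bi * B + Ai * E - 1 = \<gamma> * \<gamma> * Bi * B + (Ai - inverse a0) * E + inverse a0 * (E - a0)"
      using a0u by (simp add: field_simps)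
    moreover have "inP v n1 (\<gamma> * \<gamma> * Bi * B + (Ai - inverse a0) * E + inverse a0 * (E - a0))"
      by (intro inP_add inP_mult0[OF Aid I(4)] inP_mult0'[OF ia0 Ea0] inP_mult0[OF inP_mult0[OF inP_mono[OF _ gg2] Bi0] I(2)])
        (use lev in simp)
    ultimately show "inP v n1 (\<gamma> * \<gamma> * Bi * B + Ai * E - 1)" by (simp only:)
  qed
  have "mmul t j = M2 A B C E" unfolding j_def t_def
    by (simp add: mmul_assoc[symmetric] tY_inv[OF a0u(1) uu(1)])
  then show ?thesis unfolding setprod_def using tT jJ by (metis (mono_tags, lifting) mem_Collect_eq)
qed

end


context mctx begin

lemma PsiXz_val:
  assumes "h \<in> setprod (TX cj v X) (Jd cj v d)"
  shows "\<exists>t j. t \<in> TX cj v X \<and> j \<in> Jd cj v d \<and> h = mmul t j \<and> PsiXz cj v \<psi> d X z h = z t * PsiX \<psi> X j"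
proof -
  let ?P = "\<lambda>p. fst p \<in> TX cj v X \<and> snd p \<in> Jd cj v d \<and> h = mmul (fst p) (snd p)"
  have ex: "\<exists>p. ?P p" using assms unfolding setprod_def by auto
  have "?P (SOME p. ?P p)" using someI_ex[OF ex] .
  then show ?thesis unfolding PsiXz_def Let_def by blast
qed

lemma phi2_val:
  assumes h: "h \<in> setprod (TX cj v Xm) (Jd cj v d)" "h = M2 h11 h12 h21 h22"
    and a0: "a0 * cj a0 = 1" "inP v n1 (a0 - h22)"
  shows "PsiXz cj v \<psi> d Xm \<theta>ext h = \<chi> (M2 a0 0 0 a0) * \<psi> (nX * h21 / a0)"
  using PsiXz_val[OF h(1), of \<theta>ext] val2_any[OF _ _ _ a0] h(2) by metis

lemma phi1_val:
  assumes h: "h \<in> setprod (TX cj v Ym) (Jd cj v d)" "h = M2 h11 h12 h21 h22"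
    and a0: "a0 * cj a0 = 1" "inP v n1 (a0 - h22)"
  shows "PsiXz cj v \<psi> d Ym \<zeta> h = \<chi> (M2 a0 0 0 a0) * \<psi> (qY * h21 / a0)"
  using PsiXz_val[OF h(1), of \<zeta>] val1_any[OF _ _ _ a0] h(2) by metis

lemma k0_facts:
  assumes mu: "\<mu> \<noteq> 0" "v \<mu> = 0"
  shows "M2 \<mu> 0 0 (inverse (cj \<mu>)) \<in> Kc cj v" "M2 (inverse \<mu>) 0 0 (cj \<mu>) \<in> Kc cj v"
    "mmul (M2 \<mu> 0 0 (inverse (cj \<mu>))) (M2 (inverse \<mu>) 0 0 (cj \<mu>)) = mI"
    "mmul (M2 (inverse \<mu>) 0 0 (cj \<mu>)) (M2 \<mu> 0 0 (inverse (cj \<mu>))) = mI"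
proof -
  have c: "cj \<mu> \<noteq> 0" using mu by simp
  have i: "inP v 0 \<mu>" "inP v 0 (inverse \<mu>)" "inP v 0 (cj \<mu>)" "inP v 0 (inverse (cj \<mu>))"
    using mu by (auto simp: inP_def v_inverse)
  show "M2 \<mu> 0 0 (inverse (cj \<mu>)) \<in> Kc cj v" unfolding Kc_def using i mu c by (simp add: UG_iff)
  show "M2 (inverse \<mu>) 0 0 (cj \<mu>) \<in> Kc cj v" unfolding Kc_def using i mu c by (simp add: UG_iff)
  show "mmul (M2 \<mu> 0 0 (inverse (cj \<mu>))) (M2 (inverse \<mu>) 0 0 (cj \<mu>)) = mI" using mu c by (simp add: mI_def)
  show "mmul (M2 (inverse \<mu>) 0 0 (cj \<mu>)) (M2 \<mu> 0 0 (inverse (cj \<mu>))) = mI" using mu c by (simp add: mI_def)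
qed

lemma P1:
  assumes mu: "\<mu> \<noteq> 0" "v \<mu> = 0" "inP v n1 (\<mu> * cj \<mu> * (s*s) - 1)"
    and h: "h \<in> setprod (TX cj v Xm) (Jd cj v d)"
  defines "k0 \<equiv> M2 \<mu> 0 0 (inverse (cj \<mu>))" and "k0i \<equiv> M2 (inverse \<mu>) 0 0 (cj \<mu>)"
  shows "mmul k0 (mmul h k0i) \<in> setprod (TX cj v Ym) (Jd cj v d) \<and>
         PsiXz cj v \<psi> d Ym \<zeta> (mmul k0 (mmul h k0i)) = PsiXz cj v \<psi> d Xm \<theta>ext h"
proof -
  obtain h11 h12 h21 h22 where hh: "h = M2 h11 h12 h21 h22" by (cases h)
  obtain a0 where S: "inP v n2 h21" "inP v n1 (h11 - h22)" "a0 * cj a0 = 1" "inP v n1 (a0 - h22)"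
    using H2_S[OF h hh] by blast
  have c: "cj \<mu> \<noteq> 0" using mu by simp
  define h21' where "h21' = inverse (cj \<mu>) * h21 * inverse \<mu>"
  have Ad: "mmul k0 (mmul h k0i) = M2 h11 (\<mu> * h12 * cj \<mu>) h21' h22"
    unfolding k0_def k0i_def hh h21'_def using mu c by (simp add: algebra_simps)
  have hK: "h \<in> Kc cj v" using setprod_Kc h by blast
  have AK: "mmul k0 (mmul h k0i) \<in> Kc cj v"
    unfolding k0_def k0i_def by (intro Kc_mmul k0_facts[OF mu(1,2)] hK)
  have i: "inP v 0 (inverse \<mu>)" "inP v 0 (inverse (cj \<mu>))" using mu by (auto simp: inP_def v_inverse)
  have h21'2: "inP v n2 h21'" unfolding h21'_def by (rule inP_mult0[OF inP_mult0'[OF i(2) S(1)] i(1)])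
  have H1: "mmul k0 (mmul h k0i) \<in> setprod (TX cj v Ym) (Jd cj v d)"
    using decomp_Y[OF AK[unfolded Ad] h21'2 S(2) S(3,4)] Ad by simp
  have v1: "PsiXz cj v \<psi> d Ym \<zeta> (mmul k0 (mmul h k0i)) = \<chi> (M2 a0 0 0 a0) * \<psi> (qY * h21' / a0)"
    by (rule phi1_val[OF H1 Ad S(3,4)])
  have v2: "PsiXz cj v \<psi> d Xm \<theta>ext h = \<chi> (M2 a0 0 0 a0) * \<psi> (nX * h21 / a0)"
    by (rule phi2_val[OF h hh S(3,4)])
  have a0u: "a0 \<noteq> 0" "v a0 = 0" using unit_norm1[OF S(3)] by auto
  have vd: "varpi ^ d \<noteq> 0" by simp
  have eq: "qY * h21' / a0 - nX * h21 / a0 =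
     - (h21 * (\<mu> * cj \<mu> * (s*s) - 1) * inverse (varpi ^ d)) / (a0 * s * \<mu> * cj \<mu>)"
    unfolding qY_def nX_def h21'_def using a0u(1) mu(1) c vd s_ne by (simp add: field_simps)
  have "inP v 1 (qY * h21' / a0 - nX * h21 / a0)"
  proof -
    have "inP v (n2 + n1 + - int d) (h21 * (\<mu> * cj \<mu> * (s*s) - 1) * inverse (varpi ^ d))"
      by (intro inP_mult S(1) mu(3)) (simp add: inP_def v_inverse v_power)
    then have A: "inP v 1 (h21 * (\<mu> * cj \<mu> * (s*s) - 1) * inverse (varpi ^ d))" using lev(1)
      by (metis add.commute add_diff_cancel_left' diff_conv_add_uminus)
    have u: "a0 * s * \<mu> * cj \<mu> \<noteq> 0" "v (a0 * s * \<mu> * cj \<mu>) = 0" using a0u mu c by (auto simp: v_mult)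
    show ?thesis unfolding eq using A inP_divu[OF u] by simp
  qed
  then have "\<psi> (qY * h21' / a0) = \<psi> (nX * h21 / a0)" by (rule psi_cong[OF psi])
  then show ?thesis using H1 v1 v2 by simp
qed

lemma P2:
  assumes mu: "\<mu> \<noteq> 0" "v \<mu> = 0"
    and h: "h \<in> setprod (TX cj v Ym) (Jd cj v d)"
  defines "k0 \<equiv> M2 \<mu> 0 0 (inverse (cj \<mu>))" and "k0i \<equiv> M2 (inverse \<mu>) 0 0 (cj \<mu>)"
  shows "mmul k0i (mmul h k0) \<in> setprod (TX cj v Xm) (Jd cj v d)"
proof -
  obtain h11 h12 h21 h22 where hh: "h = M2 h11 h12 h21 h22" by (cases h)
  have S: "inP v n2 h21" "inP v n1 (h11 - h22)" using H1_S[OF h hh] by auto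
  have hK: "h \<in> Kc cj v" using setprod_Kc h by blast
  obtain a0 where a0: "a0 * cj a0 = 1" "inP v n1 (a0 - h22)" using cayley[OF hK[unfolded hh] S] by blast
  have c: "cj \<mu> \<noteq> 0" using mu by simp
  define h21' where "h21' = cj \<mu> * h21 * \<mu>"
  have Ad: "mmul k0i (mmul h k0) = M2 h11 (inverse \<mu> * h12 * inverse (cj \<mu>)) h21' h22"
    unfolding k0_def k0i_def hh h21'_def using mu c by (simp add: algebra_simps)
  have AK: "mmul k0i (mmul h k0) \<in> Kc cj v"
    unfolding k0_def k0i_def by (intro Kc_mmul k0_facts[OF mu(1,2)] hK)
  have i: "inP v 0 \<mu>" "inP v 0 (cj \<mu>)" using mu by (auto simp: inP_def)
  have h21'2: "inP v n2 h21'" unfolding h21'_def by (rule inP_mult0[OF inP_mult0'[OF i(2) S(1)] i(1)])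
  show ?thesis using decomp_X[OF AK[unfolded Ad] h21'2 S(2) a0] Ad by simp
qed

lemma iso_loc: "rep_iso (Kc cj v) (Sd cj v \<psi> d Ym \<zeta>) (Sd cj v \<psi> d Xm \<theta>ext)"
proof -
  obtain \<mu> where mu: "\<mu> \<noteq> 0" "v \<mu> = 0" "inP v n1 (\<mu> * cj \<mu> * (s*s) - 1)"
    using norm_exists by blast
  define k0 where "k0 = M2 \<mu> 0 0 (inverse (cj \<mu>))"
  define k0i where "k0i = M2 (inverse \<mu>) 0 0 (cj \<mu>)"
  define K where "K = Kc cj v"
  define H1 where "H1 = setprod (TX cj v Ym) (Jd cj v d)"
  define H2 where "H2 = setprod (TX cj v Xm) (Jd cj v d)"
  define \<phi>1 where "\<phi>1 = PsiXz cj v \<psi> d Ym \<zeta>"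
  define \<phi>2 where "\<phi>2 = PsiXz cj v \<psi> d Xm \<theta>ext"
  have kf: "k0 \<in> K" "k0i \<in> K" "mmul k0 k0i = mI" "mmul k0i k0 = mI"
    unfolding k0_def k0i_def K_def using k0_facts[OF mu(1,2)] by auto
  have H1K: "H1 \<subseteq> K" and H2K: "H2 \<subseteq> K" unfolding H1_def H2_def K_def using setprod_Kc by auto
  have KK: "x \<in> K \<Longrightarrow> y \<in> K \<Longrightarrow> mmul x y \<in> K" for x y unfolding K_def by (rule Kc_mmul)
  have p1: "mmul k0 (mmul h k0i) \<in> H1 \<and> \<phi>1 (mmul k0 (mmul h k0i)) = \<phi>2 h" if "h \<in> H2" for h
    using P1[OF mu, of h] that unfolding H1_def H2_def \<phi>1_def \<phi>2_def k0_def k0i_def by blast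
  have p2: "mmul k0i (mmul h k0) \<in> H2" if "h \<in> H1" for h
    using P2[OF mu(1,2), of h] that unfolding H1_def H2_def k0_def k0i_def by blast
  have cancel2: "mmul k0i (mmul k0 x) = x" "mmul k0 (mmul k0i x) = x" for x
    by (simp only: mmul_assoc[symmetric] kf(3,4) mmul_mI)+
  have cancel1: "mmul k0 (mmul (mmul k0i (mmul h k0)) k0i) = h" for h
    by (simp only: mmul_assoc kf(3) mmul_mI cancel2)
  have phback: "\<phi>2 (mmul k0i (mmul h k0)) = \<phi>1 h" if "h \<in> H1" for h
    using p1[OF p2[OF that]] cancel1 by simp
  have split1: "mmul k0 (mmul h k) = mmul (mmul k0 (mmul h k0i)) (mmul k0 k)" for h k
    by (simp only: mmul_assoc cancel2)
  have split2: "mmul k0i (mmul h k) = mmul (mmul k0i (mmul h k0)) (mmul k0i k)" for h k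
    by (simp only: mmul_assoc cancel2)
  define \<Phi> where "\<Phi> f = (\<lambda>x. if x \<in> K then f (mmul k0 x) else 0)" for f :: "'a m2 \<Rightarrow> complex"
  define \<Psi> where "\<Psi> g = (\<lambda>x. if x \<in> K then g (mmul k0i x) else 0)" for g :: "'a m2 \<Rightarrow> complex"
  have V: "f \<in> Sd cj v \<psi> d Ym \<zeta> \<longleftrightarrow> (\<forall>h\<in>H1. \<forall>k\<in>K. f (mmul h k) = \<phi>1 h * f k) \<and> (\<forall>k. k \<notin> K \<longrightarrow> f k = 0)" for f
    unfolding Sd_def H1_def K_def \<phi>1_def by simp
  have W: "f \<in> Sd cj v \<psi> d Xm \<theta>ext \<longleftrightarrow> (\<forall>h\<in>H2. \<forall>k\<in>K. f (mmul h k) = \<phi>2 h * f k) \<and> (\<forall>k. k \<notin> K \<longrightarrow> f k = 0)" for f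
    unfolding Sd_def H2_def K_def \<phi>2_def by simp
  have mapV: "\<Phi> f \<in> Sd cj v \<psi> d Xm \<theta>ext" if f: "f \<in> Sd cj v \<psi> d Ym \<zeta>" for f
    unfolding W
  proof (intro conjI ballI allI impI)
    fix h k assume h: "h \<in> H2" and k: "k \<in> K"
    have hk: "mmul h k \<in> K" using KK[OF _ k] H2K h by blast
    have "\<Phi> f (mmul h k) = f (mmul k0 (mmul h k))" unfolding \<Phi>_def using hk by simp
    also have "\<dots> = f (mmul (mmul k0 (mmul h k0i)) (mmul k0 k))" by (rule arg_cong[where f=f], rule split1)
    also have "\<dots> = \<phi>1 (mmul k0 (mmul h k0i)) * f (mmul k0 k)" using f p1[OF h] KK[OF kf(1) k] unfolding V by blast
    also have "\<dots> = \<phi>2 h * \<Phi> f k" using p1[OF h] k unfolding \<Phi>_def by simp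
    finally show "\<Phi> f (mmul h k) = \<phi>2 h * \<Phi> f k" .
  next
    fix k assume "k \<notin> K" then show "\<Phi> f k = 0" unfolding \<Phi>_def by simp
  qed
  have mapW: "\<Psi> g \<in> Sd cj v \<psi> d Ym \<zeta>" if g: "g \<in> Sd cj v \<psi> d Xm \<theta>ext" for g
    unfolding V
  proof (intro conjI ballI allI impI)
    fix h k assume h: "h \<in> H1" and k: "k \<in> K"
    have hk: "mmul h k \<in> K" using KK[OF _ k] H1K h by blast
    have "\<Psi> g (mmul h k) = g (mmul k0i (mmul h k))" unfolding \<Psi>_def using hk by simp
    also have "\<dots> = g (mmul (mmul k0i (mmul h k0)) (mmul k0i k))" by (rule arg_cong[where f=g], rule split2)
    also have "\<dots> = \<phi>2 (mmul k0i (mmul h k0)) * g (mmul k0i k)" using g p2[OF h] KK[OF kf(2) k] unfolding W by blast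
    also have "\<dots> = \<phi>1 h * \<Psi> g k" using phback[OF h] k unfolding \<Psi>_def by simp
    finally show "\<Psi> g (mmul h k) = \<phi>1 h * \<Psi> g k" .
  next
    fix k assume "k \<notin> K" then show "\<Psi> g k = 0" unfolding \<Psi>_def by simp
  qed
  have inv1: "\<Psi> (\<Phi> f) = f" if f: "f \<in> Sd cj v \<psi> d Ym \<zeta>" for f
  proof
    fix x show "\<Psi> (\<Phi> f) x = f x"
    proof (cases "x \<in> K")
      case True then show ?thesis unfolding \<Psi>_def \<Phi>_def using KK[OF kf(2) True] cancel2 by simp
    next
      case False then show ?thesis unfolding \<Psi>_def using f unfolding V by simp
    qed
  qed
  have inv2: "\<Phi> (\<Psi> g) = g" if g: "g \<in> Sd cj v \<psi> d Xm \<theta>ext" for g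
  proof
    fix x show "\<Phi> (\<Psi> g) x = g x"
    proof (cases "x \<in> K")
      case True then show ?thesis unfolding \<Psi>_def \<Phi>_def using KK[OF kf(1) True] cancel2 by simp
    next
      case False then show ?thesis unfolding \<Phi>_def using g unfolding W by simp
    qed
  qed
  have bij: "bij_betw \<Phi> (Sd cj v \<psi> d Ym \<zeta>) (Sd cj v \<psi> d Xm \<theta>ext)"
    by (rule bij_betw_byWitness[where f' = \<Psi>]) (use inv1 inv2 mapV mapW in auto)
  have ract: "\<Phi> (ract K k f) = ract K k (\<Phi> f)" if k: "k \<in> K" for k f
  proof
    fix x show "\<Phi> (ract K k f) x = ract K k (\<Phi> f) x"
      unfolding \<Phi>_def ract_def using KK[OF kf(1)] KK[OF _ k] by (auto simp only: mmul_assoc split: if_splits)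
  qed
  show ?thesis unfolding rep_iso_def
  proof (intro exI[of _ \<Phi>] conjI ballI allI)
    show "bij_betw \<Phi> (Sd cj v \<psi> d Ym \<zeta>) (Sd cj v \<psi> d Xm \<theta>ext)" by (rule bij)
    fix f g show "\<Phi> (\<lambda>x. f x + g x) = (\<lambda>x. \<Phi> f x + \<Phi> g x)" unfolding \<Phi>_def by auto
  next
    fix c f show "\<Phi> (\<lambda>x. c * f x) = (\<lambda>x. c * \<Phi> f x)" unfolding \<Phi>_def by auto
  next
    fix k f assume "k \<in> Kc cj v" then show "\<Phi> (ract (Kc cj v) k f) = ract (Kc cj v) k (\<Phi> f)"
      using ract unfolding K_def by blast
  qed
qed

end

theorem theorem7p1:
  fixes cj :: "'a::field \<Rightarrow> 'a" and v :: "'a \<Rightarrow> int" and varpi s :: 'a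
    and \<psi> :: "'a \<Rightarrow> complex" and \<chi> :: "'a m2 \<Rightarrow> complex"
    and r d :: nat and x1 x2 :: 'a
  assumes hE: "unram_setup cj v varpi s"
    and psi: "psi_ok v \<psi>"
    and chi: "is_char_on (Ttor cj) \<chi>"
    and rpos: "0 < r"
    and depth: "min_depth cj v \<chi> r"
    and theta0: "\<forall>z\<in>Zfil1 cj v. \<chi> z = 1"
    and xF: "cj x1 = x1" "cj x2 = x2"
    and xr: "inP v (- int r) (x1 + x2 * s)"
    and realizes: "\<forall>t\<in>Tfil cj v (int r div 2 + 1).
        \<chi> t = \<psi> (mtrace (mmul (M2 (x1 + x2 * s) 0 0 (- cj (x1 + x2 * s))) (msub t mI)))"
    and dbig: "2 * r < d"
  shows "let \<Gamma> = M2 (x1 + x2 * s) 0 0 (- cj (x1 + x2 * s));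
             \<gamma> = x1 * varpi ^ d * s;
             g = M2 1 (- (1/2) * inverse \<gamma>) \<gamma> (1/2);
             Y = mmul g (mmul \<Gamma> (minv g));
             \<zeta> = (\<lambda>t. \<chi> (mmul (minv g) (mmul t g)));
             Xn = M2 0 (inverse (varpi ^ d) * s) 0 0;
             \<theta>ext = (\<lambda>k. \<chi> (M2 (m11 k) 0 0 (m11 k)))
         in rep_iso (Kc cj v) (Sd cj v \<psi> d Y \<zeta>) (Sd cj v \<psi> d Xn \<theta>ext)"
proof -
  interpret M: mctx cj v varpi s \<psi> \<chi> r d x1 x2
    by (unfold_locales) (use hE psi chi rpos depth theta0 xF xr realizes dbig in auto)
  show ?thesis
    using M.iso_loc unfolding Let_def M.Ym_def M.gg_def M.Gm_def M.\<zeta>_def M.Xm_def M.\<theta>ext_def M.\<gamma>_def M.nX_def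
    by simp
qed

end
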